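(* For all Boolean functions $f:\{0,1\}^n\times\{0,1\}^n\to\{0,1\}$: $PC(f)=\Theta(QC(f))$.
   Context: A (classical, resp. quantum) weakly unbounded error protocol for $f$ is a two-party protocol (Alice holds $x$, Bob holds $y$) whose output is correct with probability exceeding $1/2$ on every input; if its worst-case error is $1/2-\delta$ and worst-case communication is $c$ (bits, resp. qubits), its cost is $c-\lfloor\log\delta\rfloor$ ($\log$ base 2). Classical protocols use private random bits. Quantum protocols are in Yao's model without prior entanglement: each player holds private qubits initialized to the input and $|0\rangle$; in each round one player applies a unitary to his qubits and sends one qubit; at the end a qubit is measured giving the output. $PC(f)$ (resp. $QC(f)$) is the minimum cost of a classical (resp. quantum) weakly unbounded error protocol for $f$. *)

theory Defs
  imports "HOL-Probability.Probability"
begin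

definition inputs :: "nat \<Rightarrow> bool list set" where
  "inputs n = {x. length x = n}"

text \<open>Protocol tree: at an ANode Alice sends a bit, at a BNode Bob sends a bit
  (False = go left, True = go right); leaves carry the output, so the output is a
  function of the transcript.\<close>
datatype ctree = CLeaf bool | ANode ctree ctree | BNode ctree ctree

fun cdepth :: "ctree \<Rightarrow> nat" where
  "cdepth (CLeaf b) = 0"
| "cdepth (ANode l r) = Suc (max (cdepth l) (cdepth r))"
| "cdepth (BNode l r) = Suc (max (cdepth l) (cdepth r))"

fun crun :: "ctree \<Rightarrow> (bool list \<Rightarrow> bool) \<Rightarrow> (bool list \<Rightarrow> bool) \<Rightarrow> bool list \<Rightarrow> bool" where
  "crun (CLeaf b) a b' tr = b"
| "crun (ANode l r) a b' tr =
     (if a tr then crun r a b' (tr @ [True]) else crun l a b' (tr @ [False]))"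
| "crun (BNode l r) a b' tr =
     (if b' tr then crun r a b' (tr @ [True]) else crun l a b' (tr @ [False]))"

text \<open>Private randomness of each player: an independent random variable with an
  arbitrary distribution on nat (equivalent, for bounded communication, to an
  unbounded supply of private fair coins). The message of a player is a function
  of his input, his private randomness and the transcript so far.\<close>
record cprot =
  ctr :: ctree
  crandA :: "nat pmf"
  crandB :: "nat pmf"
  cmsgA :: "bool list \<Rightarrow> nat \<Rightarrow> bool list \<Rightarrow> bool"
  cmsgB :: "bool list \<Rightarrow> nat \<Rightarrow> bool list \<Rightarrow> bool"

definition cerr :: "cprot \<Rightarrow> (bool list \<Rightarrow> bool list \<Rightarrow> bool) \<Rightarrow> bool list \<Rightarrow> bool list \<Rightarrow> real" where
  "cerr P f x y = measure_pmf.prob (pair_pmf (crandA P) (crandB P))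
      {(ra, rb). crun (ctr P) (cmsgA P x ra) (cmsgB P y rb) [] \<noteq> f x y}"

definition cdelta :: "cprot \<Rightarrow> nat \<Rightarrow> (bool list \<Rightarrow> bool list \<Rightarrow> bool) \<Rightarrow> real" where
  "cdelta P n f = 1/2 - Max ((\<lambda>(x, y). cerr P f x y) ` (inputs n \<times> inputs n))"

definition c_wue :: "cprot \<Rightarrow> nat \<Rightarrow> (bool list \<Rightarrow> bool list \<Rightarrow> bool) \<Rightarrow> bool" where
  "c_wue P n f \<longleftrightarrow> cdelta P n f > 0"

definition ccost :: "cprot \<Rightarrow> nat \<Rightarrow> (bool list \<Rightarrow> bool list \<Rightarrow> bool) \<Rightarrow> real" where
  "ccost P n f = real (cdepth (ctr P)) - of_int \<lfloor>log 2 (cdelta P n f)\<rfloor>"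

definition PC :: "nat \<Rightarrow> (bool list \<Rightarrow> bool list \<Rightarrow> bool) \<Rightarrow> real" where
  "PC n f = Inf {ccost P n f | P. c_wue P n f}"

section \<open>Quantum protocols (Yao's model, no prior entanglement)\<close>

text \<open>A system of m qubits numbered 0..m-1; a state is an amplitude function on
  basis strings (boolean lists of length m).\<close>
type_synonym qst = "bool list \<Rightarrow> complex"
type_synonym qop = "bool list \<Rightarrow> bool list \<Rightarrow> complex"

definition qbasis :: "nat \<Rightarrow> bool list set" where
  "qbasis m = {z. length z = m}"

definition restr :: "nat set \<Rightarrow> bool list \<Rightarrow> bool list" where
  "restr S z = map (\<lambda>i. if i \<in> S then z ! i else False) [0..<length z]"

text \<open>U is a unitary on the qubits in S: a matrix indexed by basis strings of the
  S-qubits, with orthonormal columns.\<close>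
definition local_unitary :: "nat \<Rightarrow> nat set \<Rightarrow> qop \<Rightarrow> bool" where
  "local_unitary m S U \<longleftrightarrow>
     (\<forall>v \<in> restr S ` qbasis m. \<forall>v' \<in> restr S ` qbasis m.
        (\<Sum>u \<in> restr S ` qbasis m. cnj (U u v) * U u v') = (if v = v' then 1 else 0))"

text \<open>Applying U (acting on the qubits in S) tensored with the identity on the rest.\<close>
definition apply_op :: "nat \<Rightarrow> nat set \<Rightarrow> qop \<Rightarrow> qst \<Rightarrow> qst" where
  "apply_op m S U \<psi> = (\<lambda>z. \<Sum>w \<in> {w \<in> qbasis m. \<forall>i<m. i \<notin> S \<longrightarrow> w ! i = z ! i}.
       U (restr S z) (restr S w) * \<psi> w)"

text \<open>A round (a, U, q): the speaker (Alice if a, else Bob) applies the unitary U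
  to all the qubits he currently holds and then sends qubit q (which he holds) to
  the other player. OA is the set of qubits currently held by Alice; Bob holds
  the rest.\<close>
fun qvalid :: "nat \<Rightarrow> (bool \<times> qop \<times> nat) list \<Rightarrow> nat set \<Rightarrow> bool" where
  "qvalid m [] OA = True"
| "qvalid m ((a, U, q) # rs) OA =
     (let S = (if a then OA else {0..<m} - OA)
      in local_unitary m S U \<and> q \<in> S \<and>
         qvalid m rs (if a then OA - {q} else insert q OA))"

fun qfinal :: "nat \<Rightarrow> (bool \<times> qop \<times> nat) list \<Rightarrow> nat set \<Rightarrow> qst \<Rightarrow> qst" where
  "qfinal m [] OA \<psi> = \<psi>"
| "qfinal m ((a, U, q) # rs) OA \<psi> =
     (let S = (if a then OA else {0..<m} - OA)
      in qfinal m rs (if a then OA - {q} else insert q OA) (apply_op m S U \<psi>))"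

text \<open>Qubits 0..n-1 hold x (Alice), qubits n..2n-1 hold y (Bob), the remaining
  qubits are initialized to |0>; qalice is the set of qubits Alice initially holds.
  The output is obtained by measuring qubit qout in the computational basis.\<close>
record qprot =
  qnum :: nat
  qalice :: "nat set"
  qrounds :: "(bool \<times> qop \<times> nat) list"
  qout :: nat

definition qinit :: "nat \<Rightarrow> bool list \<Rightarrow> bool list \<Rightarrow> qst" where
  "qinit m x y = (\<lambda>z. if z = x @ y @ replicate (m - length x - length y) False then 1 else 0)"

definition qwf :: "qprot \<Rightarrow> nat \<Rightarrow> bool" where
  "qwf P n \<longleftrightarrow> 2 * n \<le> qnum P \<and> {0..<n} \<subseteq> qalice P \<and> qalice P \<subseteq> {0..<qnum P}
     \<and> qalice P \<inter> {n..<2*n} = {} \<and> qout P < qnum P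
     \<and> qvalid (qnum P) (qrounds P) (qalice P)"

definition qerr :: "qprot \<Rightarrow> (bool list \<Rightarrow> bool list \<Rightarrow> bool) \<Rightarrow> bool list \<Rightarrow> bool list \<Rightarrow> real" where
  "qerr P f x y =
     (let \<psi> = qfinal (qnum P) (qrounds P) (qalice P) (qinit (qnum P) x y)
      in \<Sum>z \<in> {z \<in> qbasis (qnum P). z ! qout P \<noteq> f x y}. (cmod (\<psi> z))\<^sup>2)"

definition qdelta :: "qprot \<Rightarrow> nat \<Rightarrow> (bool list \<Rightarrow> bool list \<Rightarrow> bool) \<Rightarrow> real" where
  "qdelta P n f = 1/2 - Max ((\<lambda>(x, y). qerr P f x y) ` (inputs n \<times> inputs n))"

definition q_wue :: "qprot \<Rightarrow> nat \<Rightarrow> (bool list \<Rightarrow> bool list \<Rightarrow> bool) \<Rightarrow> bool" where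
  "q_wue P n f \<longleftrightarrow> qwf P n \<and> qdelta P n f > 0"

definition qcost :: "qprot \<Rightarrow> nat \<Rightarrow> (bool list \<Rightarrow> bool list \<Rightarrow> bool) \<Rightarrow> real" where
  "qcost P n f = real (length (qrounds P)) - of_int \<lfloor>log 2 (qdelta P n f)\<rfloor>"

definition QC :: "nat \<Rightarrow> (bool list \<Rightarrow> bool list \<Rightarrow> bool) \<Rightarrow> real" where
  "QC n f = Inf {qcost P n f | P. q_wue P n f}"

end

theory Submission
  imports Defs
begin

definition sg :: "bool \<Rightarrow> real" where "sg b = (if b then 1 else -1)"

definition rep :: "nat \<Rightarrow> (bool list \<Rightarrow> bool list \<Rightarrow> bool) \<Rightarrow> nat \<Rightarrow> real \<Rightarrow> bool" where
 "rep n f k e \<longleftrightarrow> e > 0 \<and> (\<exists>a b :: bool list \<Rightarrow> bool list \<Rightarrow> real.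
   (\<forall>t\<in>inputs k. \<forall>x\<in>inputs n. \<bar>a t x\<bar> \<le> 1) \<and> (\<forall>t\<in>inputs k. \<forall>y\<in>inputs n. \<bar>b t y\<bar> \<le> 1) \<and>
   (\<forall>x\<in>inputs n. \<forall>y\<in>inputs n. sg (f x y) * (\<Sum>t\<in>inputs k. a t x * b t y) \<ge> e * 2^k))"

lemma inputs_fin: "finite (inputs n)"
proof -
  have "inputs n = {xs. set xs \<subseteq> UNIV \<and> length xs = n}" by (auto simp: inputs_def)
  then show ?thesis using finite_lists_length_eq[of "UNIV::bool set" n] by simp
qed

lemma inputs_ne: "inputs n \<noteq> {}"
  by (auto simp: inputs_def intro!: exI[of _ "replicate n False"])

lemma cerr_nonneg: "cerr P f x y \<ge> 0" by (simp add: cerr_def)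
lemma qerr_nonneg: "qerr P f x y \<ge> 0" by (simp add: qerr_def Let_def sum_nonneg)

lemma cdelta_le: "cdelta P n f \<le> 1/2"
proof -
  let ?S = "(\<lambda>(x, y). cerr P f x y) ` (inputs n \<times> inputs n)"
  have "finite ?S" "?S \<noteq> {}" using inputs_fin inputs_ne by auto
  then obtain v where "v \<in> ?S" by auto
  then have "Max ?S \<ge> v" using \<open>finite ?S\<close> by simp
  moreover have "v \<ge> 0" using \<open>v \<in> ?S\<close> cerr_nonneg by auto
  ultimately show ?thesis by (simp add: cdelta_def)
qed

lemma qdelta_le: "qdelta P n f \<le> 1/2"
proof -
  let ?S = "(\<lambda>(x, y). qerr P f x y) ` (inputs n \<times> inputs n)"
  have "finite ?S" "?S \<noteq> {}" using inputs_fin inputs_ne by auto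
  then obtain v where "v \<in> ?S" by auto
  then have "Max ?S \<ge> v" using \<open>finite ?S\<close> by simp
  moreover have "v \<ge> 0" using \<open>v \<in> ?S\<close> qerr_nonneg by auto
  ultimately show ?thesis by (simp add: qdelta_def)
qed

lemma floor_log_le: assumes "0 < d" "d \<le> 1/2" shows "\<lfloor>log 2 d\<rfloor> \<le> -1"
proof -
  have "log 2 d \<le> log 2 (1/2)" using assms by simp
  also have "\<dots> = -1" by (simp add: log_divide)
  finally show ?thesis by linarith
qed

lemma floor_log_mono: assumes "0 < d" "d \<le> d'" shows "\<lfloor>log 2 d\<rfloor> \<le> \<lfloor>log 2 d'\<rfloor>"
  using assms by (intro floor_mono) simp

lemma floor_log_div: assumes "0 < d" shows "\<lfloor>log 2 (d / 2^j)\<rfloor> = \<lfloor>log 2 d\<rfloor> - int j"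
proof -
  have "log 2 (d / 2^j) = log 2 d - real_of_int (int j)" using assms by (simp add: log_divide log_nat_power)
  then show ?thesis using floor_diff_of_int[of "log 2 d" "int j"] by simp
qed

lemma ccost_ge: "c_wue P n f \<Longrightarrow> ccost P n f \<ge> 0"
  using floor_log_le[of "cdelta P n f"] cdelta_le[of P n f] by (simp add: ccost_def c_wue_def)

lemma qcost_ge: "q_wue P n f \<Longrightarrow> qcost P n f \<ge> 0"
  using floor_log_le[of "qdelta P n f"] qdelta_le[of P n f] by (simp add: qcost_def q_wue_def)

lemma PC_le: assumes "c_wue P n f" shows "PC n f \<le> ccost P n f"
  unfolding PC_def
  by (rule cInf_lower) (use assms ccost_ge in \<open>auto simp: bdd_below_def\<close>)

lemma QC_le: assumes "q_wue P n f" shows "QC n f \<le> qcost P n f"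
  unfolding QC_def
  by (rule cInf_lower) (use assms qcost_ge in \<open>auto simp: bdd_below_def\<close>)



lemma inputs_Suc: "inputs (Suc d) = (\<lambda>(c,t). c#t) ` (UNIV \<times> inputs d)"
  by (auto simp: inputs_def length_Suc_conv image_iff)

lemma sum_inputs_Suc: "(\<Sum>s\<in>inputs (Suc d). g s) = (\<Sum>t\<in>inputs d. g (True#t) + g (False#t))"
proof -
  have inj: "inj_on (\<lambda>(c,t). c#t) (UNIV \<times> inputs d)" by (auto simp: inj_on_def)
  have "(\<Sum>s\<in>inputs (Suc d). g s) = (\<Sum>p\<in>UNIV \<times> inputs d. g (fst p # snd p))"
    unfolding inputs_Suc by (subst sum.reindex[OF inj]) (auto intro!: sum.cong)
  also have "\<dots> = (\<Sum>c\<in>UNIV. \<Sum>t\<in>inputs d. g (c#t))"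
    by (simp add: sum.cartesian_product case_prod_beta)
  also have "\<dots> = (\<Sum>t\<in>inputs d. g (True#t) + g (False#t))"
    by (simp add: UNIV_bool sum.distrib add.commute)
  finally show ?thesis .
qed

lemma sum_inputs_add: "(\<Sum>s\<in>inputs (a+b). g s) = (\<Sum>u\<in>inputs a. \<Sum>v\<in>inputs b. g (u@v))"
proof (induction a arbitrary: g)
  case 0
  then show ?case by (simp add: inputs_def)
next
  case (Suc a)
  have "(\<Sum>s\<in>inputs (Suc a + b). g s) = (\<Sum>t\<in>inputs (a+b). g (True#t) + g (False#t))"
    using sum_inputs_Suc[where d="a+b" and g=g] by simp
  also have "\<dots> = (\<Sum>t\<in>inputs (a+b). g (True#t)) + (\<Sum>t\<in>inputs (a+b). g (False#t))"
    by (simp add: sum.distrib)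
  also have "\<dots> = (\<Sum>u\<in>inputs a. \<Sum>v\<in>inputs b. g (True#u@v)) + (\<Sum>u\<in>inputs a. \<Sum>v\<in>inputs b. g (False#u@v))"
    using Suc[of "\<lambda>s. g (True#s)"] Suc[of "\<lambda>s. g (False#s)"] by simp
  also have "\<dots> = (\<Sum>u\<in>inputs a. (\<Sum>v\<in>inputs b. g (True#u@v)) + (\<Sum>v\<in>inputs b. g (False#u@v)))"
    by (simp add: sum.distrib)
  also have "\<dots> = (\<Sum>u\<in>inputs (Suc a). \<Sum>v\<in>inputs b. g (u@v))"
    using sum_inputs_Suc[where d=a and g="\<lambda>u. \<Sum>v\<in>inputs b. g (u@v)"] by simp
  finally show ?case .
qed

fun pathA :: "ctree \<Rightarrow> (bool list \<Rightarrow> bool) \<Rightarrow> bool list \<Rightarrow> bool list \<Rightarrow> bool" where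
  "pathA (CLeaf c) a tr t = (c \<and> (\<forall>b\<in>set t. \<not> b))"
| "pathA (ANode l r) a tr [] = False"
| "pathA (ANode l r) a tr (b#t) = (a tr = b \<and> pathA (if b then r else l) a (tr@[b]) t)"
| "pathA (BNode l r) a tr [] = False"
| "pathA (BNode l r) a tr (b#t) = pathA (if b then r else l) a (tr@[b]) t"

fun pathB :: "ctree \<Rightarrow> (bool list \<Rightarrow> bool) \<Rightarrow> bool list \<Rightarrow> bool list \<Rightarrow> bool" where
  "pathB (CLeaf c) a tr t = True"
| "pathB (ANode l r) a tr [] = False"
| "pathB (ANode l r) a tr (b#t) = pathB (if b then r else l) a (tr@[b]) t"
| "pathB (BNode l r) a tr [] = False"
| "pathB (BNode l r) a tr (b#t) = (a tr = b \<and> pathB (if b then r else l) a (tr@[b]) t)"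

lemma crun_path: "cdepth T \<le> d \<Longrightarrow>
   crun T a b tr \<longleftrightarrow> (\<exists>t. length t = d \<and> pathA T a tr t \<and> pathB T b tr t)"
proof (induction T arbitrary: tr d)
  case (CLeaf c)
  show ?case by (auto intro!: exI[of _ "replicate d False"])
next
  case (ANode l r)
  then obtain d' where d: "d = Suc d'" "cdepth l \<le> d'" "cdepth r \<le> d'" by (cases d) auto
  show ?case
  proof
    assume "crun (ANode l r) a b tr"
    then show "\<exists>t. length t = d \<and> pathA (ANode l r) a tr t \<and> pathB (ANode l r) b tr t"
      using ANode.IH(1)[OF d(2)] ANode.IH(2)[OF d(3)] d(1)
      by (cases "a tr") (auto intro: exI[of _ "True # _"] exI[of _ "False # _"])
  next
    assume "\<exists>t. length t = d \<and> pathA (ANode l r) a tr t \<and> pathB (ANode l r) b tr t"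
    then obtain t where t: "length t = d" "pathA (ANode l r) a tr t" "pathB (ANode l r) b tr t" by blast
    then obtain c t' where "t = c # t'" using d(1) by (cases t) auto
    then show "crun (ANode l r) a b tr"
      using t ANode.IH(1)[OF d(2)] ANode.IH(2)[OF d(3)] d(1) by (cases c) auto
  qed
next
  case (BNode l r)
  then obtain d' where d: "d = Suc d'" "cdepth l \<le> d'" "cdepth r \<le> d'" by (cases d) auto
  show ?case
  proof
    assume "crun (BNode l r) a b tr"
    then show "\<exists>t. length t = d \<and> pathA (BNode l r) a tr t \<and> pathB (BNode l r) b tr t"
      using BNode.IH(1)[OF d(2)] BNode.IH(2)[OF d(3)] d(1)
      by (cases "b tr") (auto intro: exI[of _ "True # _"] exI[of _ "False # _"])
  next
    assume "\<exists>t. length t = d \<and> pathA (BNode l r) a tr t \<and> pathB (BNode l r) b tr t"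
    then obtain t where t: "length t = d" "pathA (BNode l r) a tr t" "pathB (BNode l r) b tr t" by blast
    then obtain c t' where "t = c # t'" using d(1) by (cases t) auto
    then show "crun (BNode l r) a b tr"
      using t BNode.IH(1)[OF d(2)] BNode.IH(2)[OF d(3)] d(1) by (cases c) auto
  qed
qed

lemma path_unique: "length t = length t' \<Longrightarrow> pathA T a tr t \<Longrightarrow> pathB T b tr t \<Longrightarrow>
   pathA T a tr t' \<Longrightarrow> pathB T b tr t' \<Longrightarrow> t = t'"
proof (induction T arbitrary: tr t t')
  case (CLeaf c)
  have "t = replicate (length t) False" by (rule replicate_eqI) (use CLeaf in auto)
  moreover have "t' = replicate (length t') False" by (rule replicate_eqI) (use CLeaf in auto)
  ultimately show ?case using CLeaf(1) by simp
next
  case (ANode l r)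
  obtain c t1 where t: "t = c # t1" using ANode.prems(2) by (cases t) auto
  obtain c' t1' where t': "t' = c' # t1'" using ANode.prems(4) by (cases t') auto
  have cc: "c' = c" using ANode.prems(2,4) t t' by simp
  have "t1 = t1'"
  proof (cases c)
    case True
    then show ?thesis using ANode.IH(2)[where tr="tr@[True]" and t=t1 and t'=t1'] ANode.prems t t' cc by simp
  next
    case False
    then show ?thesis using ANode.IH(1)[where tr="tr@[False]" and t=t1 and t'=t1'] ANode.prems t t' cc by simp
  qed
  then show ?case using t t' cc by simp
next
  case (BNode l r)
  obtain c t1 where t: "t = c # t1" using BNode.prems(2) by (cases t) auto
  obtain c' t1' where t': "t' = c' # t1'" using BNode.prems(4) by (cases t') auto
  have cc: "c' = c" using BNode.prems(3,5) t t' by simp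
  have "t1 = t1'"
  proof (cases c)
    case True
    then show ?thesis using BNode.IH(2)[where tr="tr@[True]" and t=t1 and t'=t1'] BNode.prems t t' cc by simp
  next
    case False
    then show ?thesis using BNode.IH(1)[where tr="tr@[False]" and t=t1 and t'=t1'] BNode.prems t t' cc by simp
  qed
  then show ?case using t t' cc by simp
qed

lemma prob_crun:
  fixes A B :: "nat pmf"
  assumes "cdepth T \<le> d"
  shows "measure_pmf.prob (pair_pmf A B) {(ra, rb). crun T (fa ra) (fb rb) []} =
     (\<Sum>t\<in>inputs d. measure_pmf.prob A {ra. pathA T (fa ra) [] t} * measure_pmf.prob B {rb. pathB T (fb rb) [] t})"
proof -
  let ?E = "\<lambda>t. {ra. pathA T (fa ra) [] t} \<times> {rb. pathB T (fb rb) [] t}"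
  have "{(ra, rb). crun T (fa ra) (fb rb) []} = (\<Union>t\<in>inputs d. ?E t)"
    using crun_path[OF assms] by (auto simp: inputs_def)
  moreover have "disjoint_family_on ?E (inputs d)"
    unfolding disjoint_family_on_def using path_unique by (fastforce simp: inputs_def)
  ultimately have "measure_pmf.prob (pair_pmf A B) {(ra, rb). crun T (fa ra) (fb rb) []} =
      (\<Sum>t\<in>inputs d. measure_pmf.prob (pair_pmf A B) (?E t))"
    by (simp add: measure_pmf.finite_measure_finite_Union inputs_fin)
  also have "\<dots> = (\<Sum>t\<in>inputs d. measure_pmf.prob A {ra. pathA T (fa ra) [] t} * measure_pmf.prob B {rb. pathB T (fb rb) [] t})"
    by (simp add: measure_pmf_prob_product)
  finally show ?thesis .
qed

lemma C1_proof: assumes "c_wue P n f" shows "rep n f (cdepth (ctr P) + 1) (cdelta P n f / 2^(cdepth (ctr P) + 1))"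
proof -
  define d where "d = cdepth (ctr P)"
  define \<delta> where "\<delta> = cdelta P n f"
  have d0: "\<delta> > 0" using assms by (simp add: c_wue_def \<delta>_def)
  define PA where "PA t x = measure_pmf.prob (crandA P) {ra. pathA (ctr P) (cmsgA P x ra) [] t}" for t x
  define PB where "PB t y = measure_pmf.prob (crandB P) {rb. pathB (ctr P) (cmsgB P y rb) [] t}" for t y
  define a where "a s x = (if hd s then PA (tl s) x else if tl s = replicate d False then -1 else 0)" for s x
  define b where "b s y = (if hd s then PB (tl s) y else 1/2)" for s y
  define p1 where "p1 x y = measure_pmf.prob (pair_pmf (crandA P) (crandB P))
      {(ra, rb). crun (ctr P) (cmsgA P x ra) (cmsgB P y rb) []}" for x y
  have p1: "p1 x y = (\<Sum>t\<in>inputs d. PA t x * PB t y)" for x y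
    unfolding p1_def PA_def PB_def d_def by (rule prob_crun) simp
  have sumab: "(\<Sum>s\<in>inputs (d+1). a s x * b s y) = p1 x y - 1/2" for x y
  proof -
    have "(\<Sum>s\<in>inputs (d+1). a s x * b s y) = (\<Sum>t\<in>inputs d. PA t x * PB t y + (if t = replicate d False then -1 else 0)/2)"
      using sum_inputs_Suc[where d=d and g="\<lambda>s. a s x * b s y"] by (simp add: a_def b_def)
    also have "\<dots> = p1 x y + (\<Sum>t\<in>inputs d. (if t = replicate d False then -1 else 0)/2)"
      by (simp add: sum.distrib p1)
    also have "(\<Sum>t\<in>inputs d. (if t = replicate d False then -1 else 0)/2) = (-1/2::real)"
    proof -
      have "(\<Sum>t\<in>inputs d. (if t = replicate d False then -1 else 0)/2) = (\<Sum>t\<in>inputs d. (if t = replicate d False then -1 else 0))/(2::real)"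
        by (simp add: sum_divide_distrib)
      also have "\<dots> = -1/2" using inputs_fin[of d] by (simp add: sum.delta inputs_def)
      finally show ?thesis .
    qed
    finally show ?thesis by simp
  qed
  have errle: "cerr P f x y \<le> 1/2 - \<delta>" if "x \<in> inputs n" "y \<in> inputs n" for x y
  proof -
    have "cerr P f x y \<le> Max ((\<lambda>(x, y). cerr P f x y) ` (inputs n \<times> inputs n))"
      using that inputs_fin by (intro Max_ge) auto
    then show ?thesis by (simp add: \<delta>_def cdelta_def)
  qed
  have cerr_eq: "cerr P f x y = (if f x y then 1 - p1 x y else p1 x y)" for x y
  proof (cases "f x y")
    case True
    have "{(ra, rb). crun (ctr P) (cmsgA P x ra) (cmsgB P y rb) [] \<noteq> f x y} =
          space (measure_pmf (pair_pmf (crandA P) (crandB P))) - {(ra, rb). crun (ctr P) (cmsgA P x ra) (cmsgB P y rb) []}"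
      using True by auto
    moreover have "measure_pmf.prob (pair_pmf (crandA P) (crandB P)) (space (measure_pmf (pair_pmf (crandA P) (crandB P))) - {(ra, rb). crun (ctr P) (cmsgA P x ra) (cmsgB P y rb) []})
       = 1 - measure_pmf.prob (pair_pmf (crandA P) (crandB P)) {(ra, rb). crun (ctr P) (cmsgA P x ra) (cmsgB P y rb) []}"
      by (rule measure_pmf.prob_compl) simp
    ultimately show ?thesis using True
      by (simp add: cerr_def p1_def)
  next
    case False
    then show ?thesis by (simp add: cerr_def p1_def)
  qed
  have main: "sg (f x y) * (\<Sum>t\<in>inputs (d + 1). a t x * b t y) \<ge> \<delta> / 2 ^ (d + 1) * 2 ^ (d + 1)"
    if xy: "x \<in> inputs n" "y \<in> inputs n" for x y
  proof -
    have "sg (f x y) * (p1 x y - 1/2) \<ge> \<delta>"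
      using errle[OF xy] cerr_eq[of x y] by (auto simp: sg_def)
    then show ?thesis using sumab[of x y] by simp
  qed
  have ab: "\<bar>a t x\<bar> \<le> 1" "\<bar>b t x\<bar> \<le> 1" for t x by (simp_all add: a_def PA_def b_def PB_def)
  show ?thesis unfolding rep_def d_def[symmetric] \<delta>_def[symmetric]
    using main ab d0 by (intro conjI exI[of _ a] exI[of _ b]) auto
qed


lemma coin_lemma:
  fixes \<pi> :: "'j \<Rightarrow> real"
  assumes "finite J" "\<forall>j\<in>J. 0 \<le> \<pi> j \<and> \<pi> j \<le> 1"
  shows "\<exists>(u::nat pmf) S. \<forall>j\<in>J. measure_pmf.prob u (S j) = \<pi> j"
  using assms
proof (induction J rule: finite_induct)
  case empty
  then show ?case by auto
next
  case (insert j0 J)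
  have "\<exists>(u::nat pmf) S. \<forall>j\<in>J. measure_pmf.prob u (S j) = \<pi> j" using insert.IH insert.prems by simp
  then obtain u :: "nat pmf" and S where uS: "\<forall>j\<in>J. measure_pmf.prob u (S j) = \<pi> j" by blast
  define enc :: "nat \<times> bool \<Rightarrow> nat" where "enc = (\<lambda>(a,b). prod_encode (a, if b then 1 else 0))"
  define u' where "u' = map_pmf enc (pair_pmf u (bernoulli_pmf (\<pi> j0)))"
  define S' where "S' j = (if j = j0 then {m. snd (prod_decode m) = 1} else {m. fst (prod_decode m) \<in> S j})" for j
  have p0: "0 \<le> \<pi> j0" "\<pi> j0 \<le> 1" using insert.prems by auto
  have "measure_pmf.prob u' (S' j) = \<pi> j" if "j \<in> insert j0 J" for j
  proof (cases "j = j0")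
    case True
    have "enc -` S' j = UNIV \<times> {True}" using True by (auto simp: enc_def S'_def split: if_splits)
    then show ?thesis unfolding u'_def measure_map_pmf using True p0
      by (simp add: measure_pmf_prob_product measure_pmf_single pmf_bernoulli_True)
  next
    case False
    have "enc -` S' j = S j \<times> UNIV" using False by (auto simp: enc_def S'_def)
    then show ?thesis unfolding u'_def measure_map_pmf using False that uS
      by (simp add: measure_pmf_prob_product)
  qed
  then show ?case by blast
qed

lemma prob_compl_UNIV: "measure_pmf.prob M (UNIV - A) = 1 - measure_pmf.prob M A"
  using measure_pmf.prob_compl[of A M] by simp

definition gadget :: ctree where
  "gadget = ANode (BNode (CLeaf True) (CLeaf False)) (BNode (CLeaf False) (CLeaf True))"

fun full :: "nat \<Rightarrow> ctree" where
  "full 0 = gadget"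
| "full (Suc j) = ANode (full j) (full j)"

lemma cdepth_full: "cdepth (full j) = j + 2"
  by (induction j) (auto simp: gadget_def)

lemma crun_full: "length t = j \<Longrightarrow> (\<forall>i<j. a (tr @ take i t) = t!i) \<Longrightarrow>
   crun (full j) a b tr = (a (tr@t) = b (tr@t@[a (tr@t)]))"
proof (induction j arbitrary: tr t)
  case 0
  then show ?case by (auto simp: gadget_def)
next
  case (Suc j)
  then obtain c t' where t: "t = c # t'" "length t' = j" by (cases t) auto
  have ac: "a tr = c" using Suc.prems(2)[rule_format, of 0] t by simp
  have "\<forall>i<j. a ((tr @ [c]) @ take i t') = t'!i"
  proof (intro allI impI)
    fix i assume "i < j"
    then show "a ((tr @ [c]) @ take i t') = t'!i"
      using Suc.prems(2)[rule_format, of "Suc i"] t by simp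
  qed
  then have "crun (full j) a b (tr @ [c]) = (a ((tr@[c])@t') = b ((tr@[c])@t'@[a ((tr@[c])@t')]))"
    using Suc.IH[OF t(2)] by blast
  then show ?case using ac t by (cases c) auto
qed

lemma C2_proof: assumes "rep n f k e" shows "\<exists>P. c_wue P n f \<and> cdepth (ctr P) = k+2 \<and> cdelta P n f \<ge> e/2"
proof -
  obtain a b where e0: "e > 0" and ab: "\<forall>t\<in>inputs k. \<forall>x\<in>inputs n. \<bar>a t x\<bar> \<le> 1"
      "\<forall>t\<in>inputs k. \<forall>y\<in>inputs n. \<bar>b t y\<bar> \<le> 1"
    and sum: "\<forall>x\<in>inputs n. \<forall>y\<in>inputs n. sg (f x y) * (\<Sum>t\<in>inputs k. a t x * b t y) \<ge> e * 2^k"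
    using assms unfolding rep_def by blast
  have fin: "finite (inputs k \<times> inputs n)" using inputs_fin by simp
  have "\<forall>j\<in>inputs k \<times> inputs n. 0 \<le> (1 + a (fst j) (snd j))/2 \<and> (1 + a (fst j) (snd j))/2 \<le> 1"
  proof
    fix j assume j: "j \<in> inputs k \<times> inputs n"
    then have "\<bar>a (fst j) (snd j)\<bar> \<le> 1" using ab(1) by (cases j) auto
    then show "0 \<le> (1 + a (fst j) (snd j))/2 \<and> (1 + a (fst j) (snd j))/2 \<le> 1" by (simp add: abs_le_iff)
  qed
  then obtain uA :: "nat pmf" and SA where uA: "\<forall>j\<in>inputs k \<times> inputs n. measure_pmf.prob uA (SA j) = (1 + a (fst j) (snd j))/2"
    using coin_lemma[OF fin, of "\<lambda>j. (1 + a (fst j) (snd j))/2"] by blast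
  have "\<forall>j\<in>inputs k \<times> inputs n. 0 \<le> (1 + b (fst j) (snd j))/2 \<and> (1 + b (fst j) (snd j))/2 \<le> 1"
  proof
    fix j assume j: "j \<in> inputs k \<times> inputs n"
    then have "\<bar>b (fst j) (snd j)\<bar> \<le> 1" using ab(2) by (cases j) auto
    then show "0 \<le> (1 + b (fst j) (snd j))/2 \<and> (1 + b (fst j) (snd j))/2 \<le> 1" by (simp add: abs_le_iff)
  qed
  then obtain uB :: "nat pmf" and SB where uB: "\<forall>j\<in>inputs k \<times> inputs n. measure_pmf.prob uB (SB j) = (1 + b (fst j) (snd j))/2"
    using coin_lemma[OF fin, of "\<lambda>j. (1 + b (fst j) (snd j))/2"] by blast
  define U where "U = pmf_of_set (inputs k)"
  define dec where "dec t = (if length t = k then t else replicate k False)" for t :: "bool list"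
  define tA where "tA r = dec (fst (from_nat r :: bool list \<times> nat))" for r
  define wA where "wA r = snd (from_nat r :: bool list \<times> nat)" for r
  define P where "P = \<lparr>ctr = full k, crandA = map_pmf (to_nat :: bool list \<times> nat \<Rightarrow> nat) (pair_pmf U uA),
     crandB = uB,
     cmsgA = (\<lambda>x r tr. if length tr < k then tA r ! length tr else wA r \<in> SA (take k tr, x)),
     cmsgB = (\<lambda>y r tr. r \<in> SB (take k tr, y))\<rparr>"
  have ltA: "length (tA r) = k" for r by (simp add: tA_def dec_def)
  have crunP: "crun (ctr P) (cmsgA P x ra) (cmsgB P y rb) [] = ((wA ra \<in> SA (tA ra, x)) = (rb \<in> SB (tA ra, y)))" for x y ra rb
  proof -
    have "crun (full k) (cmsgA P x ra) (cmsgB P y rb) [] =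
       (cmsgA P x ra ([]@tA ra) = cmsgB P y rb ([]@tA ra@[cmsgA P x ra ([]@tA ra)]))"
      by (rule crun_full) (auto simp: ltA P_def min_def)
    then show ?thesis by (simp add: P_def ltA)
  qed
  define pa where "pa t x = (1 + a t x)/2" for t x
  define pb where "pb t y = (1 + b t y)/2" for t y
  define p1 where "p1 x y = measure_pmf.prob (pair_pmf (crandA P) (crandB P))
      {(ra, rb). crun (ctr P) (cmsgA P x ra) (cmsgB P y rb) []}" for x y
  have p1: "p1 x y = (\<Sum>t\<in>inputs k. (pa t x * pb t y + (1 - pa t x) * (1 - pb t y)) / 2^k)"
    if xy: "x \<in> inputs n" "y \<in> inputs n" for x y
  proof -
    define X where "X t c = {r. tA r = t \<and> (wA r \<in> SA (t, x)) = c}" for t c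
    define Y where "Y t c = {r. (r \<in> SB (t, y)) = c}" for t c
    define E where "E tc = X (fst tc) (snd tc) \<times> Y (fst tc) (snd tc)" for tc
    have ev: "{(ra, rb). crun (ctr P) (cmsgA P x ra) (cmsgB P y rb) []} = (\<Union>tc\<in>inputs k \<times> UNIV. E tc)"
      by (auto simp: crunP E_def X_def Y_def ltA inputs_def)
    have dis: "disjoint_family_on E (inputs k \<times> UNIV)"
      by (auto simp: disjoint_family_on_def E_def X_def Y_def)
    have "p1 x y = (\<Sum>tc\<in>inputs k \<times> UNIV. measure_pmf.prob (pair_pmf (crandA P) (crandB P)) (E tc))"
      unfolding p1_def ev using dis inputs_fin
      by (subst measure_pmf.finite_measure_finite_Union) auto
    also have "\<dots> = (\<Sum>tc\<in>inputs k \<times> UNIV. measure_pmf.prob (crandA P) (X (fst tc) (snd tc)) * measure_pmf.prob uB (Y (fst tc) (snd tc)))"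
      by (simp add: E_def measure_pmf_prob_product P_def)
    also have "\<dots> = (\<Sum>t\<in>inputs k. (pa t x * pb t y + (1 - pa t x) * (1 - pb t y)) / 2^k)"
    proof -
      have XA: "measure_pmf.prob (crandA P) (X t c) = (if c then pa t x else 1 - pa t x) / 2^k"
        if t: "t \<in> inputs k" for t c
      proof -
        have "(to_nat :: bool list \<times> nat \<Rightarrow> nat) -` X t c = {t'. dec t' = t} \<times> {w. (w \<in> SA (t, x)) = c}"
          by (auto simp: X_def tA_def wA_def)
        then have "measure_pmf.prob (crandA P) (X t c) = measure_pmf.prob U {t'. dec t' = t} * measure_pmf.prob uA {w. (w \<in> SA (t, x)) = c}"
          by (simp add: P_def measure_map_pmf measure_pmf_prob_product)
        moreover have "measure_pmf.prob U {t'. dec t' = t} = 1 / 2^k"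
        proof -
          have "inputs k \<inter> {t'. dec t' = t} = {t}" using t by (auto simp: inputs_def dec_def)
          moreover have "card (inputs k) = 2^k"
          proof -
            have "inputs k = {xs. set xs \<subseteq> (UNIV::bool set) \<and> length xs = k}" by (auto simp: inputs_def)
            then show ?thesis using card_lists_length_eq[of "UNIV::bool set" k] by (simp add: card_UNIV_bool)
          qed
          ultimately show ?thesis by (simp add: U_def measure_pmf_of_set inputs_fin inputs_ne)
        qed
        moreover have "measure_pmf.prob uA {w. (w \<in> SA (t, x)) = c} = (if c then pa t x else 1 - pa t x)"
        proof (cases c)
          case True
          then show ?thesis using uA t xy by (simp add: pa_def)
        next
          case False
          have "{w. (w \<in> SA (t, x)) = c} = space (measure_pmf uA) - SA (t, x)" using False by auto
          then show ?thesis using uA t xy False by (simp add: pa_def prob_compl_UNIV)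
        qed
        ultimately show ?thesis by simp
      qed
      have YB: "measure_pmf.prob uB (Y t c) = (if c then pb t y else 1 - pb t y)"
        if t: "t \<in> inputs k" for t c
      proof (cases c)
        case True
        then show ?thesis using uB t xy by (simp add: pb_def Y_def)
      next
        case False
        have "Y t c = space (measure_pmf uB) - SB (t, y)" using False by (auto simp: Y_def)
        then show ?thesis using uB t xy False by (simp add: pb_def prob_compl_UNIV)
      qed
      have "(\<Sum>tc\<in>inputs k \<times> UNIV. measure_pmf.prob (crandA P) (X (fst tc) (snd tc)) * measure_pmf.prob uB (Y (fst tc) (snd tc)))
         = (\<Sum>t\<in>inputs k. \<Sum>c\<in>UNIV. measure_pmf.prob (crandA P) (X t c) * measure_pmf.prob uB (Y t c))"
        by (simp add: sum.cartesian_product case_prod_beta)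
      also have "\<dots> = (\<Sum>t\<in>inputs k. (pa t x * pb t y + (1 - pa t x) * (1 - pb t y)) / 2^k)"
        by (rule sum.cong) (auto simp: UNIV_bool XA YB field_simps)
      finally show ?thesis .
    qed
    finally show ?thesis .
  qed
  have p1': "p1 x y = 1/2 + (\<Sum>t\<in>inputs k. a t x * b t y) / 2^(k+1)"
    if xy: "x \<in> inputs n" "y \<in> inputs n" for x y
  proof -
    have "p1 x y = (\<Sum>t\<in>inputs k. 1/2^(k+1) + a t x * b t y / 2^(k+1))"
      unfolding p1[OF xy] by (rule sum.cong) (auto simp: pa_def pb_def field_simps)
    also have "\<dots> = real (card (inputs k)) / 2^(k+1) + (\<Sum>t\<in>inputs k. a t x * b t y) / 2^(k+1)"
      by (simp add: sum.distrib sum_divide_distrib)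
    also have "card (inputs k) = 2^k"
    proof -
      have "inputs k = {xs. set xs \<subseteq> (UNIV::bool set) \<and> length xs = k}" by (auto simp: inputs_def)
      then show ?thesis using card_lists_length_eq[of "UNIV::bool set" k] by (simp add: card_UNIV_bool)
    qed
    finally show ?thesis by simp
  qed
  have err: "cerr P f x y \<le> 1/2 - e/2" if xy: "x \<in> inputs n" "y \<in> inputs n" for x y
  proof -
    have s: "sg (f x y) * (\<Sum>t\<in>inputs k. a t x * b t y) / 2^(k+1) \<ge> e/2"
      using sum xy by (simp add: field_simps)
    show ?thesis
    proof (cases "f x y")
      case True
      have "{(ra, rb). crun (ctr P) (cmsgA P x ra) (cmsgB P y rb) [] \<noteq> f x y} =
          space (measure_pmf (pair_pmf (crandA P) (crandB P))) - {(ra, rb). crun (ctr P) (cmsgA P x ra) (cmsgB P y rb) []}"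
        using True by auto
      moreover have "measure_pmf.prob (pair_pmf (crandA P) (crandB P)) (space (measure_pmf (pair_pmf (crandA P) (crandB P))) - {(ra, rb). crun (ctr P) (cmsgA P x ra) (cmsgB P y rb) []})
         = 1 - p1 x y"
        unfolding p1_def by (rule measure_pmf.prob_compl) simp
      ultimately have "cerr P f x y = 1 - p1 x y" by (simp add: cerr_def)
      then show ?thesis using p1'[OF xy] s True by (simp add: sg_def)
    next
      case False
      then have "cerr P f x y = p1 x y" by (simp add: cerr_def p1_def)
      then show ?thesis using p1'[OF xy] s False by (simp add: sg_def)
    qed
  qed
  have "Max ((\<lambda>(x, y). cerr P f x y) ` (inputs n \<times> inputs n)) \<le> 1/2 - e/2"
    using err inputs_fin inputs_ne by (intro Max.boundedI) auto
  then have "cdelta P n f \<ge> e/2" by (simp add: cdelta_def)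
  moreover have "cdepth (ctr P) = k+2" by (simp add: P_def cdepth_full)
  ultimately show ?thesis using e0 by (intro exI[of _ P]) (auto simp: c_wue_def)
qed


definition RR :: "nat \<Rightarrow> nat set \<Rightarrow> bool list set" where
  "RR m S = restr S ` qbasis m"

definition mg :: "nat set \<Rightarrow> bool list \<Rightarrow> bool list \<Rightarrow> bool list" where
  "mg S z v = map (\<lambda>i. if i \<in> S then v!i else z!i) [0..<length z]"

definition dep :: "nat \<Rightarrow> nat set \<Rightarrow> (bool list \<Rightarrow> 'a) \<Rightarrow> bool" where
  "dep m S g \<longleftrightarrow> (\<forall>z\<in>qbasis m. \<forall>w\<in>qbasis m. (\<forall>i<m. i \<in> S \<longrightarrow> z!i = w!i) \<longrightarrow> g z = g w)"

definition nrm :: "nat \<Rightarrow> nat set \<Rightarrow> (bool list \<Rightarrow> complex) \<Rightarrow> real" where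
  "nrm m S g = (\<Sum>v\<in>RR m S. (cmod (g v))\<^sup>2)"

lemma qbasis_fin: "finite (qbasis m)"
proof -
  have "qbasis m = {xs. set xs \<subseteq> (UNIV::bool set) \<and> length xs = m}" by (auto simp: qbasis_def)
  then show ?thesis using finite_lists_length_eq[of "UNIV::bool set" m] by simp
qed

lemma length_restr[simp]: "length (restr S z) = length z"
  by (simp add: restr_def)

lemma nth_restr[simp]: "i < length z \<Longrightarrow> restr S z ! i = (if i \<in> S then z!i else False)"
  by (simp add: restr_def)

lemma length_mg[simp]: "length (mg S z v) = length z"
  by (simp add: mg_def)

lemma nth_mg[simp]: "i < length z \<Longrightarrow> mg S z v ! i = (if i \<in> S then v!i else z!i)"
  by (simp add: mg_def)

lemma RR_char: "v \<in> RR m S \<longleftrightarrow> length v = m \<and> (\<forall>i<m. i \<notin> S \<longrightarrow> \<not> v!i)"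
proof
  assume "v \<in> RR m S"
  then show "length v = m \<and> (\<forall>i<m. i \<notin> S \<longrightarrow> \<not> v!i)" by (auto simp: RR_def qbasis_def)
next
  assume a: "length v = m \<and> (\<forall>i<m. i \<notin> S \<longrightarrow> \<not> v!i)"
  then have "restr S v = v" by (auto simp: list_eq_iff_nth_eq)
  then show "v \<in> RR m S" using a unfolding RR_def qbasis_def by (metis (mono_tags, lifting) image_eqI mem_Collect_eq)
qed

lemma RR_fin: "finite (RR m S)"
  by (simp add: RR_def qbasis_fin)

lemma RR_sub: "RR m S \<subseteq> qbasis m"
  by (auto simp: RR_char qbasis_def)

lemma restr_RR: "v \<in> RR m S \<Longrightarrow> restr S v = v"
  by (auto simp: RR_char list_eq_iff_nth_eq)

lemma restr_in_RR: "z \<in> qbasis m \<Longrightarrow> restr S z \<in> RR m S"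
  by (simp add: RR_def)

lemma RR_cong: "(\<And>i. i < m \<Longrightarrow> i \<in> S \<longleftrightarrow> i \<in> S') \<Longrightarrow> RR m S = RR m S'"
  by (auto simp: RR_char)

lemma restr_cong: "length z = m \<Longrightarrow> (\<And>i. i < m \<Longrightarrow> i \<in> S \<longleftrightarrow> i \<in> S') \<Longrightarrow> restr S z = restr S' z"
  by (auto simp: list_eq_iff_nth_eq)

lemma dep_mono: "dep m S g \<Longrightarrow> (\<And>i. i < m \<Longrightarrow> i \<in> S \<Longrightarrow> i \<in> S') \<Longrightarrow> dep m S' g"
  unfolding dep_def by blast

lemma nrm_cong: "(\<And>i. i < m \<Longrightarrow> i \<in> S \<longleftrightarrow> i \<in> S') \<Longrightarrow> nrm m S g = nrm m S' g"
  unfolding nrm_def using RR_cong by metis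

lemma mg_qbasis: "z \<in> qbasis m \<Longrightarrow> mg S z v \<in> qbasis m"
  by (simp add: qbasis_def)

lemma apply_op_eq:
  assumes z: "z \<in> qbasis m"
  shows "apply_op m S U \<psi> z = (\<Sum>v\<in>RR m S. U (restr S z) v * \<psi> (mg S z v))"
  unfolding apply_op_def
proof (rule sum.reindex_bij_witness[where i="mg S z" and j="restr S"])
  fix w assume w: "w \<in> {w \<in> qbasis m. \<forall>i<m. i \<notin> S \<longrightarrow> w ! i = z ! i}"
  then show e: "mg S z (restr S w) = w" using z by (auto simp: qbasis_def list_eq_iff_nth_eq)
  show "restr S w \<in> RR m S" using w by (simp add: RR_def)
  show "U (restr S z) (restr S w) * \<psi> (mg S z (restr S w)) = U (restr S z) (restr S w) * \<psi> w"
    by (simp add: e)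
next
  fix v assume v: "v \<in> RR m S"
  then show "restr S (mg S z v) = v" using z by (auto simp: qbasis_def list_eq_iff_nth_eq RR_char)
  show "mg S z v \<in> {w \<in> qbasis m. \<forall>i<m. i \<notin> S \<longrightarrow> w ! i = z ! i}"
    using z v by (auto simp: qbasis_def)
qed

lemma split_sum:
  "(\<Sum>z\<in>qbasis m. F z) = (\<Sum>c\<in>RR m (-S). \<Sum>u\<in>RR m S. F (mg S c u))"
proof -
  have "(\<Sum>z\<in>qbasis m. F z) = (\<Sum>p\<in>RR m (-S) \<times> RR m S. F (mg S (fst p) (snd p)))"
  proof (rule sum.reindex_bij_witness[where i="\<lambda>p. mg S (fst p) (snd p)" and j="\<lambda>z. (restr (-S) z, restr S z)"])
    fix z assume z: "z \<in> qbasis m"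
    then show "mg S (fst (restr (- S) z, restr S z)) (snd (restr (- S) z, restr S z)) = z"
      by (auto simp: qbasis_def list_eq_iff_nth_eq)
    show "(restr (- S) z, restr S z) \<in> RR m (- S) \<times> RR m S" using z by (simp add: RR_def)
    show "F (mg S (fst (restr (- S) z, restr S z)) (snd (restr (- S) z, restr S z))) = F z"
      using z by (auto simp: qbasis_def intro!: arg_cong[where f=F] simp: list_eq_iff_nth_eq)
  next
    fix p assume p: "p \<in> RR m (- S) \<times> RR m S"
    then show "(restr (- S) (mg S (fst p) (snd p)), restr S (mg S (fst p) (snd p))) = p"
      by (cases p) (auto simp: RR_char list_eq_iff_nth_eq)
    show "mg S (fst p) (snd p) \<in> qbasis m" using p by (auto simp: RR_char qbasis_def)
  qed
  also have "\<dots> = (\<Sum>c\<in>RR m (-S). \<Sum>u\<in>RR m S. F (mg S c u))"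
    by (simp add: sum.cartesian_product case_prod_beta)
  finally show ?thesis .
qed

lemma dep_mg1:
  assumes d: "dep m S g" and c: "c \<in> qbasis m" and u: "u \<in> RR m S"
  shows "g (mg S c u) = g u"
proof -
  have "mg S c u \<in> qbasis m" "u \<in> qbasis m" using c u RR_sub by (auto simp: qbasis_def)
  moreover have "\<forall>i<m. i \<in> S \<longrightarrow> mg S c u ! i = u ! i" using c by (simp add: qbasis_def)
  ultimately show ?thesis using d unfolding dep_def by blast
qed

lemma dep_mg2:
  assumes d: "dep m (-S) h" and c: "c \<in> qbasis m"
  shows "h (mg S c u) = h c"
proof -
  have "mg S c u \<in> qbasis m" using c by (auto simp: qbasis_def)
  moreover have "\<forall>i<m. i \<in> -S \<longrightarrow> mg S c u ! i = c ! i" using c by (simp add: qbasis_def)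
  ultimately show ?thesis using d c unfolding dep_def by blast
qed

lemma product_sum:
  fixes g h :: "bool list \<Rightarrow> complex"
  assumes "dep m S g" "dep m (-S) h"
  shows "(\<Sum>z\<in>qbasis m. g z * h z) = (\<Sum>u\<in>RR m S. g u) * (\<Sum>c\<in>RR m (-S). h c)"
proof -
  have "(\<Sum>z\<in>qbasis m. g z * h z) = (\<Sum>c\<in>RR m (-S). \<Sum>u\<in>RR m S. g (mg S c u) * h (mg S c u))"
    by (rule split_sum)
  also have "\<dots> = (\<Sum>c\<in>RR m (-S). \<Sum>u\<in>RR m S. g u * h c)"
    using RR_sub[of m "-S"] dep_mg1[OF assms(1)] dep_mg2[OF assms(2)]
    by (intro sum.cong refl) auto
  also have "\<dots> = (\<Sum>u\<in>RR m S. g u) * (\<Sum>c\<in>RR m (-S). h c)"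
    by (subst sum.swap) (simp add: sum_product)
  finally show ?thesis .
qed

lemma unitary_norm:
  fixes U :: "'a \<Rightarrow> 'a \<Rightarrow> complex"
  assumes fin: "finite R" and un: "\<forall>v\<in>R. \<forall>v'\<in>R. (\<Sum>u\<in>R. cnj (U u v) * U u v') = (if v = v' then 1 else 0)"
  shows "(\<Sum>u\<in>R. (cmod (\<Sum>v\<in>R. U u v * g v))\<^sup>2) = (\<Sum>v\<in>R. (cmod (g v))\<^sup>2)"
proof -
  have "complex_of_real (\<Sum>u\<in>R. (cmod (\<Sum>v\<in>R. U u v * g v))\<^sup>2) =
      (\<Sum>u\<in>R. (\<Sum>v'\<in>R. U u v' * g v') * cnj (\<Sum>v\<in>R. U u v * g v))"
    by (simp only: of_real_sum complex_norm_square)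
  also have "\<dots> = (\<Sum>u\<in>R. \<Sum>v'\<in>R. \<Sum>v\<in>R. cnj (g v) * g v' * (cnj (U u v) * U u v'))"
  proof (intro sum.cong refl)
    fix u
    show "(\<Sum>v'\<in>R. U u v' * g v') * cnj (\<Sum>v\<in>R. U u v * g v) = (\<Sum>v'\<in>R. \<Sum>v\<in>R. cnj (g v) * g v' * (cnj (U u v) * U u v'))"
      unfolding cnj_sum sum_distrib_right sum_distrib_left by (subst sum.swap) (simp add: mult_ac)
  qed
  also have "\<dots> = (\<Sum>v'\<in>R. \<Sum>u\<in>R. \<Sum>v\<in>R. cnj (g v) * g v' * (cnj (U u v) * U u v'))"
    by (rule sum.swap)
  also have "\<dots> = (\<Sum>v'\<in>R. \<Sum>v\<in>R. \<Sum>u\<in>R. cnj (g v) * g v' * (cnj (U u v) * U u v'))"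
  proof (rule sum.cong[OF refl])
    fix v' show "(\<Sum>u\<in>R. \<Sum>v\<in>R. cnj (g v) * g v' * (cnj (U u v) * U u v')) = (\<Sum>v\<in>R. \<Sum>u\<in>R. cnj (g v) * g v' * (cnj (U u v) * U u v'))"
      by (rule sum.swap)
  qed
  also have "\<dots> = (\<Sum>v'\<in>R. \<Sum>v\<in>R. cnj (g v) * g v' * (\<Sum>u\<in>R. cnj (U u v) * U u v'))"
    by (simp only: sum_distrib_left)
  also have "\<dots> = (\<Sum>v'\<in>R. \<Sum>v\<in>R. if v = v' then cnj (g v) * g v' else 0)"
    using un by (intro sum.cong refl) auto
  also have "\<dots> = (\<Sum>v'\<in>R. cnj (g v') * g v')"
    using fin by (intro sum.cong refl) (simp add: sum.delta)
  also have "\<dots> = complex_of_real (\<Sum>v\<in>R. (cmod (g v))\<^sup>2)"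
    by (simp only: of_real_sum complex_norm_square mult.commute)
  finally show ?thesis using of_real_eq_iff by blast
qed

lemma apply_op_norm:
  assumes U: "local_unitary m S U"
  shows "(\<Sum>z\<in>qbasis m. (cmod (apply_op m S U \<psi> z))\<^sup>2) = (\<Sum>z\<in>qbasis m. (cmod (\<psi> z))\<^sup>2)"
proof -
  have un: "\<forall>v\<in>RR m S. \<forall>v'\<in>RR m S. (\<Sum>u\<in>RR m S. cnj (U u v) * U u v') = (if v = v' then 1 else 0)"
    using U by (simp add: local_unitary_def RR_def)
  have "(\<Sum>z\<in>qbasis m. (cmod (apply_op m S U \<psi> z))\<^sup>2) =
     (\<Sum>c\<in>RR m (-S). \<Sum>u\<in>RR m S. (cmod (apply_op m S U \<psi> (mg S c u)))\<^sup>2)"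
    by (rule split_sum)
  also have "\<dots> = (\<Sum>c\<in>RR m (-S). \<Sum>u\<in>RR m S. (cmod (\<Sum>v\<in>RR m S. U u v * \<psi> (mg S c v)))\<^sup>2)"
  proof (intro sum.cong refl)
    fix c u assume c: "c \<in> RR m (-S)" and u: "u \<in> RR m S"
    have cq: "c \<in> qbasis m" using c RR_sub by auto
    have "restr S (mg S c u) = u" using u cq by (auto simp: RR_char qbasis_def list_eq_iff_nth_eq)
    moreover have "mg S (mg S c u) v = mg S c v" for v using cq by (auto simp: qbasis_def list_eq_iff_nth_eq)
    ultimately show "(cmod (apply_op m S U \<psi> (mg S c u)))\<^sup>2 = (cmod (\<Sum>v\<in>RR m S. U u v * \<psi> (mg S c v)))\<^sup>2"
      using apply_op_eq[OF mg_qbasis[OF cq]] by simp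
  qed
  also have "\<dots> = (\<Sum>c\<in>RR m (-S). \<Sum>v\<in>RR m S. (cmod (\<psi> (mg S c v)))\<^sup>2)"
    by (intro sum.cong refl unitary_norm[OF RR_fin un])
  also have "\<dots> = (\<Sum>z\<in>qbasis m. (cmod (\<psi> z))\<^sup>2)"
    by (rule split_sum[symmetric])
  finally show ?thesis .
qed


definition decomp :: "nat \<Rightarrow> nat set \<Rightarrow> nat \<Rightarrow> qst \<Rightarrow> (bool list \<Rightarrow> qst) \<Rightarrow> (bool list \<Rightarrow> qst) \<Rightarrow> bool" where
  "decomp m OA j \<psi> A B \<longleftrightarrow> (\<forall>z\<in>qbasis m. \<psi> z = (\<Sum>t\<in>inputs j. A t z * B t z)) \<and>
     (\<forall>t. dep m OA (A t)) \<and> (\<forall>t. dep m (-OA) (B t)) \<and>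
     (\<forall>t\<in>inputs j. nrm m OA (A t) \<le> 1) \<and> (\<forall>t\<in>inputs j. nrm m (-OA) (B t) \<le> 1)"

definition appl :: "nat \<Rightarrow> nat set \<Rightarrow> qop \<Rightarrow> qst \<Rightarrow> qst" where
  "appl m S U g = (\<lambda>z. \<Sum>v\<in>RR m S. U (restr S z) v * g v)"

lemma step_apply:
  assumes U: "local_unitary m S U" and G: "\<forall>t. dep m S (G t)" and H: "\<forall>t. dep m (-S) (H t)"
    and psi: "\<forall>z\<in>qbasis m. \<psi> z = (\<Sum>t\<in>I. G t z * H t z)"
  shows "\<forall>z\<in>qbasis m. apply_op m S U \<psi> z = (\<Sum>t\<in>I. appl m S U (G t) z * H t z)"
    and "dep m S (appl m S U g)"
    and "nrm m S (appl m S U g) = nrm m S g"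
proof -
  show "\<forall>z\<in>qbasis m. apply_op m S U \<psi> z = (\<Sum>t\<in>I. appl m S U (G t) z * H t z)"
  proof
    fix z assume z: "z \<in> qbasis m"
    have "apply_op m S U \<psi> z = (\<Sum>v\<in>RR m S. U (restr S z) v * \<psi> (mg S z v))"
      by (rule apply_op_eq[OF z])
    also have "\<dots> = (\<Sum>v\<in>RR m S. U (restr S z) v * (\<Sum>t\<in>I. G t v * H t z))"
    proof (intro sum.cong refl)
      fix v assume v: "v \<in> RR m S"
      have "\<psi> (mg S z v) = (\<Sum>t\<in>I. G t (mg S z v) * H t (mg S z v))"
        using psi mg_qbasis[OF z] by blast
      also have "\<dots> = (\<Sum>t\<in>I. G t v * H t z)"
        by (intro sum.cong refl) (simp add: dep_mg1[OF spec[OF G] z v] dep_mg2[OF spec[OF H] z])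
      finally show "U (restr S z) v * \<psi> (mg S z v) = U (restr S z) v * (\<Sum>t\<in>I. G t v * H t z)" by simp
    qed
    also have "\<dots> = (\<Sum>v\<in>RR m S. \<Sum>t\<in>I. U (restr S z) v * G t v * H t z)"
      by (simp only: sum_distrib_left mult.assoc)
    also have "\<dots> = (\<Sum>t\<in>I. \<Sum>v\<in>RR m S. U (restr S z) v * G t v * H t z)"
      by (rule sum.swap)
    also have "\<dots> = (\<Sum>t\<in>I. appl m S U (G t) z * H t z)"
      unfolding appl_def by (simp only: sum_distrib_right)
    finally show "apply_op m S U \<psi> z = (\<Sum>t\<in>I. appl m S U (G t) z * H t z)" .
  qed
  show "dep m S (appl m S U g)"
    unfolding dep_def appl_def
  proof (intro ballI impI)
    fix z w assume "z \<in> qbasis m" "w \<in> qbasis m" "\<forall>i<m. i \<in> S \<longrightarrow> z ! i = w ! i"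
    then have "restr S z = restr S w" by (auto simp: qbasis_def list_eq_iff_nth_eq)
    then show "(\<Sum>v\<in>RR m S. U (restr S z) v * g v) = (\<Sum>v\<in>RR m S. U (restr S w) v * g v)" by simp
  qed
  have un: "\<forall>v\<in>RR m S. \<forall>v'\<in>RR m S. (\<Sum>u\<in>RR m S. cnj (U u v) * U u v') = (if v = v' then 1 else 0)"
    using U by (simp add: local_unitary_def RR_def)
  have "nrm m S (appl m S U g) = (\<Sum>u\<in>RR m S. (cmod (\<Sum>v\<in>RR m S. U u v * g v))\<^sup>2)"
    unfolding nrm_def appl_def by (intro sum.cong refl) (simp add: restr_RR)
  also have "\<dots> = nrm m S g" unfolding nrm_def by (rule unitary_norm[OF RR_fin un])
  finally show "nrm m S (appl m S U g) = nrm m S g" .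
qed

lemma nrm_update_le:
  assumes q: "q \<in> S" "q < m"
  shows "nrm m (S - {q}) (\<lambda>z. g (z[q := b])) \<le> nrm m S g"
proof -
  let ?f = "\<lambda>v. v[q := b]"
  have inj: "inj_on ?f (RR m (S - {q}))"
  proof (rule inj_onI)
    fix v v' assume v: "v \<in> RR m (S - {q})" "v' \<in> RR m (S - {q})" "v[q := b] = v'[q := b]"
    then have "\<not> v!q" "\<not> v'!q" using q by (auto simp: RR_char)
    then show "v = v'" using v(3) v(1,2) q
      by (auto simp: RR_char list_eq_iff_nth_eq nth_list_update split: if_splits)
  qed
  have sub: "?f ` RR m (S - {q}) \<subseteq> RR m S" using q by (auto simp: RR_char nth_list_update)
  have "nrm m (S - {q}) (\<lambda>z. g (z[q := b])) = (\<Sum>u\<in>?f ` RR m (S - {q}). (cmod (g u))\<^sup>2)"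
    unfolding nrm_def by (simp add: sum.reindex[OF inj])
  also have "\<dots> \<le> (\<Sum>u\<in>RR m S. (cmod (g u))\<^sup>2)"
    by (rule sum_mono2[OF RR_fin sub]) simp
  finally show ?thesis unfolding nrm_def .
qed

lemma nrm_filter_le:
  assumes q: "q \<in> S" "q < m" and H: "dep m (-S) h"
  shows "nrm m (-(S - {q})) (\<lambda>z. if z!q = b then h z else 0) \<le> nrm m (-S) h"
proof -
  let ?f = "\<lambda>v. v[q := False]"
  let ?D = "{v \<in> RR m (-(S - {q})). v!q = b}"
  have inj: "inj_on ?f ?D"
  proof (rule inj_onI)
    fix v v' assume v: "v \<in> ?D" "v' \<in> ?D" "v[q := False] = v'[q := False]"
    then show "v = v'" using q
      by (auto simp: RR_char list_eq_iff_nth_eq nth_list_update split: if_splits)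
  qed
  have sub: "?f ` ?D \<subseteq> RR m (-S)" using q by (auto simp: RR_char nth_list_update)
  have hq: "h v = h (v[q := False])" if "v \<in> RR m (-(S - {q}))" for v
  proof -
    have "v \<in> qbasis m" using that RR_sub by auto
    moreover have "v[q := False] \<in> qbasis m" using calculation by (simp add: qbasis_def)
    moreover have "\<forall>i<m. i \<in> -S \<longrightarrow> v ! i = v[q := False] ! i"
    proof (intro allI impI)
      fix i assume "i < m" "i \<in> -S"
      then have "i \<noteq> q" using q by auto
      then show "v ! i = v[q := False] ! i" by simp
    qed
    ultimately show ?thesis using H unfolding dep_def by blast
  qed
  have "nrm m (-(S - {q})) (\<lambda>z. if z!q = b then h z else 0) = (\<Sum>v\<in>?D. (cmod (h v))\<^sup>2)"
  proof -
    have "nrm m (-(S - {q})) (\<lambda>z. if z!q = b then h z else 0) = (\<Sum>v\<in>RR m (-(S - {q})). if v!q = b then (cmod (h v))\<^sup>2 else 0)"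
      unfolding nrm_def by (intro sum.cong refl) auto
    also have "\<dots> = (\<Sum>v\<in>?D. (cmod (h v))\<^sup>2)" by (simp add: sum.inter_filter RR_fin)
    finally show ?thesis .
  qed
  also have "\<dots> = (\<Sum>v\<in>?D. (cmod (h (v[q := False])))\<^sup>2)"
    using hq by (intro sum.cong refl) auto
  also have "\<dots> = (\<Sum>u\<in>?f ` ?D. (cmod (h u))\<^sup>2)"
    by (subst sum.reindex[OF inj]) (simp add: comp_def)
  also have "\<dots> \<le> (\<Sum>u\<in>RR m (-S). (cmod (h u))\<^sup>2)"
    by (rule sum_mono2[OF RR_fin sub]) simp
  finally show ?thesis unfolding nrm_def .
qed

lemma step_send:
  fixes G H :: "bool list \<Rightarrow> qst"
  assumes q: "q \<in> S" "q < m" and G: "\<forall>t. dep m S (G t)" and H: "\<forall>t. dep m (-S) (H t)"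
    and psi: "\<forall>z\<in>qbasis m. \<psi> z = (\<Sum>t\<in>inputs j. G t z * H t z)"
  shows "\<forall>z\<in>qbasis m. \<psi> z = (\<Sum>s\<in>inputs (Suc j). G (tl s) (z[q := hd s]) * (if z!q = hd s then H (tl s) z else 0))"
    and "dep m (S - {q}) (\<lambda>z. G (tl s) (z[q := hd s]))"
    and "dep m (-(S - {q})) (\<lambda>z. if z!q = hd s then H (tl s) z else 0)"
proof -
  show "\<forall>z\<in>qbasis m. \<psi> z = (\<Sum>s\<in>inputs (Suc j). G (tl s) (z[q := hd s]) * (if z!q = hd s then H (tl s) z else 0))"
  proof
    fix z assume z: "z \<in> qbasis m"
    have "(\<Sum>s\<in>inputs (Suc j). G (tl s) (z[q := hd s]) * (if z!q = hd s then H (tl s) z else 0))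
       = (\<Sum>t\<in>inputs j. G t (z[q := True]) * (if z!q then H t z else 0) + G t (z[q := False]) * (if \<not> z!q then H t z else 0))"
      unfolding sum_inputs_Suc list.sel list.sel by simp
    also have "\<dots> = (\<Sum>t\<in>inputs j. G t z * H t z)"
    proof (intro sum.cong refl)
      fix t show "G t (z[q := True]) * (if z!q then H t z else 0) + G t (z[q := False]) * (if \<not> z!q then H t z else 0) = G t z * H t z"
      proof (cases "z!q")
        case True
        then have "z[q := True] = z" by (metis list_update_id)
        then show ?thesis using True by simp
      next
        case False
        then have "z[q := False] = z" by (metis list_update_id)
        then show ?thesis using False by simp
      qed
    qed
    finally show "\<psi> z = (\<Sum>s\<in>inputs (Suc j). G (tl s) (z[q := hd s]) * (if z!q = hd s then H (tl s) z else 0))"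
      using psi z by simp
  qed
  show "dep m (S - {q}) (\<lambda>z. G (tl s) (z[q := hd s]))"
    unfolding dep_def
  proof (intro ballI impI)
    fix z w assume zw: "z \<in> qbasis m" "w \<in> qbasis m" "\<forall>i<m. i \<in> S - {q} \<longrightarrow> z ! i = w ! i"
    have "z[q := hd s] \<in> qbasis m" "w[q := hd s] \<in> qbasis m" using zw by (auto simp: qbasis_def)
    moreover have "\<forall>i<m. i \<in> S \<longrightarrow> z[q := hd s] ! i = w[q := hd s] ! i"
      using zw q by (auto simp: qbasis_def nth_list_update)
    ultimately show "G (tl s) (z[q := hd s]) = G (tl s) (w[q := hd s])"
      using G unfolding dep_def by blast
  qed
  show "dep m (-(S - {q})) (\<lambda>z. if z!q = hd s then H (tl s) z else 0)"
    unfolding dep_def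
  proof (intro ballI impI)
    fix z w assume zw: "z \<in> qbasis m" "w \<in> qbasis m" "\<forall>i<m. i \<in> -(S - {q}) \<longrightarrow> z ! i = w ! i"
    then have "z!q = w!q" using q by auto
    moreover have "H (tl s) z = H (tl s) w"
    proof -
      have "\<forall>i<m. i \<in> -S \<longrightarrow> z!i = w!i" using zw(3) by auto
      then show ?thesis using H zw(1,2) unfolding dep_def by blast
    qed
    ultimately show "(if z!q = hd s then H (tl s) z else 0) = (if w!q = hd s then H (tl s) w else 0)" by simp
  qed
qed


lemma tl_inputs: "s \<in> inputs (Suc j) \<Longrightarrow> tl s \<in> inputs j"
  by (auto simp: inputs_def)

lemma round_alice:
  assumes U: "local_unitary m OA U" and q: "q \<in> OA" "q < m" and D: "decomp m OA j \<psi> A B"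
  shows "decomp m (OA - {q}) (Suc j) (apply_op m OA U \<psi>)
           (\<lambda>s z. appl m OA U (A (tl s)) (z[q := hd s])) (\<lambda>s z. if z!q = hd s then B (tl s) z else 0)"
proof -
  have psi: "\<forall>z\<in>qbasis m. \<psi> z = (\<Sum>t\<in>inputs j. A t z * B t z)" and dA: "\<forall>t. dep m OA (A t)"
    and dB: "\<forall>t. dep m (-OA) (B t)" and nA: "\<forall>t\<in>inputs j. nrm m OA (A t) \<le> 1"
    and nB: "\<forall>t\<in>inputs j. nrm m (-OA) (B t) \<le> 1"
    using D by (auto simp: decomp_def)
  note ap = step_apply[OF U dA dB psi]
  have dA': "\<forall>t. dep m OA (appl m OA U (A t))" using ap(2) by blast
  note sd = step_send[OF q dA' dB ap(1)]
  show ?thesis unfolding decomp_def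
  proof (intro conjI ballI allI)
    fix z assume "z \<in> qbasis m"
    then show "apply_op m OA U \<psi> z = (\<Sum>s\<in>inputs (Suc j). appl m OA U (A (tl s)) (z[q := hd s]) * (if z ! q = hd s then B (tl s) z else 0))"
      using sd(1) by blast
  next
    fix s show "dep m (OA - {q}) (\<lambda>z. appl m OA U (A (tl s)) (z[q := hd s]))" by (rule sd(2))
  next
    fix s show "dep m (- (OA - {q})) (\<lambda>z. if z ! q = hd s then B (tl s) z else 0)" by (rule sd(3))
  next
    fix s assume s: "s \<in> inputs (Suc j)"
    have "nrm m (OA - {q}) (\<lambda>z. appl m OA U (A (tl s)) (z[q := hd s])) \<le> nrm m OA (appl m OA U (A (tl s)))"
      by (rule nrm_update_le[OF q])
    also have "\<dots> = nrm m OA (A (tl s))" by (rule ap(3))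
    also have "\<dots> \<le> 1" using nA tl_inputs[OF s] by blast
    finally show "nrm m (OA - {q}) (\<lambda>z. appl m OA U (A (tl s)) (z[q := hd s])) \<le> 1" .
  next
    fix s assume s: "s \<in> inputs (Suc j)"
    have "nrm m (- (OA - {q})) (\<lambda>z. if z ! q = hd s then B (tl s) z else 0) \<le> nrm m (-OA) (B (tl s))"
      using dB q by (intro nrm_filter_le) auto
    also have "\<dots> \<le> 1" using nB tl_inputs[OF s] by blast
    finally show "nrm m (- (OA - {q})) (\<lambda>z. if z ! q = hd s then B (tl s) z else 0) \<le> 1" .
  qed
qed

lemma round_bob:
  assumes U: "local_unitary m ({0..<m} - OA) U" and q: "q \<in> {0..<m} - OA" and D: "decomp m OA j \<psi> A B"
  shows "decomp m (insert q OA) (Suc j) (apply_op m ({0..<m} - OA) U \<psi>)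
           (\<lambda>s z. if z!q = hd s then A (tl s) z else 0) (\<lambda>s z. appl m ({0..<m} - OA) U (B (tl s)) (z[q := hd s]))"
proof -
  let ?S = "{0..<m} - OA"
  have q': "q \<in> ?S" "q < m" using q by auto
  have psi: "\<forall>z\<in>qbasis m. \<psi> z = (\<Sum>t\<in>inputs j. B t z * A t z)" and dA: "\<forall>t. dep m OA (A t)"
    and dB: "\<forall>t. dep m (-OA) (B t)" and nA: "\<forall>t\<in>inputs j. nrm m OA (A t) \<le> 1"
    and nB: "\<forall>t\<in>inputs j. nrm m (-OA) (B t) \<le> 1"
    using D by (auto simp: decomp_def mult.commute)
  have "dep m ?S (B t)" for t by (rule dep_mono[OF spec[OF dB, of t]]) auto
  then have dB': "\<forall>t. dep m ?S (B t)" by blast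
  have "dep m (-?S) (A t)" for t by (rule dep_mono[OF spec[OF dA, of t]]) auto
  then have dA': "\<forall>t. dep m (-?S) (A t)" by blast
  note ap = step_apply[OF U dB' dA' psi]
  have dB'': "\<forall>t. dep m ?S (appl m ?S U (B t))" using ap(2) by blast
  note sd = step_send[OF q' dB'' dA' ap(1)]
  show ?thesis unfolding decomp_def
  proof (intro conjI ballI allI)
    fix z assume "z \<in> qbasis m"
    then show "apply_op m ?S U \<psi> z = (\<Sum>s\<in>inputs (Suc j). (if z ! q = hd s then A (tl s) z else 0) * appl m ?S U (B (tl s)) (z[q := hd s]))"
      using sd(1) by (simp add: mult.commute)
  next
    fix s show "dep m (insert q OA) (\<lambda>z. if z ! q = hd s then A (tl s) z else 0)"
      using sd(3)[of s] by (rule dep_mono) auto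
  next
    fix s show "dep m (- insert q OA) (\<lambda>z. appl m ?S U (B (tl s)) (z[q := hd s]))"
      using sd(2)[of s] by (rule dep_mono) auto
  next
    fix s assume s: "s \<in> inputs (Suc j)"
    have "nrm m (insert q OA) (\<lambda>z. if z ! q = hd s then A (tl s) z else 0) = nrm m (-(?S - {q})) (\<lambda>z. if z ! q = hd s then A (tl s) z else 0)"
      using q by (intro nrm_cong) auto
    also have "\<dots> \<le> nrm m (-?S) (A (tl s))"
      using dA' q' by (intro nrm_filter_le) auto
    also have "\<dots> = nrm m OA (A (tl s))" by (intro nrm_cong) auto
    also have "\<dots> \<le> 1" using nA tl_inputs[OF s] by blast
    finally show "nrm m (insert q OA) (\<lambda>z. if z ! q = hd s then A (tl s) z else 0) \<le> 1" .
  next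
    fix s assume s: "s \<in> inputs (Suc j)"
    have "nrm m (- insert q OA) (\<lambda>z. appl m ?S U (B (tl s)) (z[q := hd s])) = nrm m (?S - {q}) (\<lambda>z. appl m ?S U (B (tl s)) (z[q := hd s]))"
      by (intro nrm_cong) auto
    also have "\<dots> \<le> nrm m ?S (appl m ?S U (B (tl s)))"
      by (rule nrm_update_le[OF q'])
    also have "\<dots> = nrm m ?S (B (tl s))" by (rule ap(3))
    also have "\<dots> = nrm m (-OA) (B (tl s))" by (intro nrm_cong) auto
    also have "\<dots> \<le> 1" using nB tl_inputs[OF s] by blast
    finally show "nrm m (- insert q OA) (\<lambda>z. appl m ?S U (B (tl s)) (z[q := hd s])) \<le> 1" .
  qed
qed

lemma decomp_qfinal:
  "qvalid m rs OA \<Longrightarrow> OA \<subseteq> {0..<m} \<Longrightarrow> (\<forall>x\<in>X. \<forall>y\<in>Y. decomp m OA j (\<Psi> x y) (Af x) (Bf y)) \<Longrightarrow>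
   \<exists>OA' Af' Bf'. OA' \<subseteq> {0..<m} \<and> (\<forall>x\<in>X. \<forall>y\<in>Y. decomp m OA' (j + length rs) (qfinal m rs OA (\<Psi> x y)) (Af' x) (Bf' y))"
proof (induction rs arbitrary: OA j \<Psi> Af Bf)
  case Nil
  then show ?case by auto
next
  case (Cons r rs)
  obtain a U q where r: "r = (a, U, q)" by (cases r) auto
  show ?case
  proof (cases a)
    case True
    have v: "local_unitary m OA U" "q \<in> OA" "qvalid m rs (OA - {q})"
      using Cons.prems(1) r True by (simp_all add: Let_def)
    have qm: "q < m" using v(2) Cons.prems(2) by auto
    have "\<forall>x\<in>X. \<forall>y\<in>Y. decomp m (OA - {q}) (Suc j) (apply_op m OA U (\<Psi> x y))
           ((\<lambda>x s z. appl m OA U (Af x (tl s)) (z[q := hd s])) x) ((\<lambda>y s z. if z!q = hd s then Bf y (tl s) z else 0) y)"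
      using round_alice[OF v(1) v(2) qm] Cons.prems(3) by blast
    from Cons.IH[OF v(3) _ this] Cons.prems(2) obtain OA' Af' Bf' where
      "OA' \<subseteq> {0..<m}" "\<forall>x\<in>X. \<forall>y\<in>Y. decomp m OA' (Suc j + length rs) (qfinal m rs (OA - {q}) (apply_op m OA U (\<Psi> x y))) (Af' x) (Bf' y)"
      by blast
    then show ?thesis using r True by (intro exI[of _ OA'] exI[of _ Af'] exI[of _ Bf']) (simp add: Let_def)
  next
    case False
    have v: "local_unitary m ({0..<m} - OA) U" "q \<in> {0..<m} - OA" "qvalid m rs (insert q OA)"
      using Cons.prems(1) r False by (simp_all add: Let_def)
    have sub: "insert q OA \<subseteq> {0..<m}" using v(2) Cons.prems(2) by auto
    have "\<forall>x\<in>X. \<forall>y\<in>Y. decomp m (insert q OA) (Suc j) (apply_op m ({0..<m} - OA) U (\<Psi> x y))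
           ((\<lambda>x s z. if z!q = hd s then Af x (tl s) z else 0) x) ((\<lambda>y s z. appl m ({0..<m} - OA) U (Bf y (tl s)) (z[q := hd s])) y)"
      using round_bob[OF v(1) v(2)] Cons.prems(3) by blast
    from Cons.IH[OF v(3) sub this] obtain OA' Af' Bf' where
      "OA' \<subseteq> {0..<m}" "\<forall>x\<in>X. \<forall>y\<in>Y. decomp m OA' (Suc j + length rs) (qfinal m rs (insert q OA) (apply_op m ({0..<m} - OA) U (\<Psi> x y))) (Af' x) (Bf' y)"
      by blast
    then show ?thesis using r False by (intro exI[of _ OA'] exI[of _ Af'] exI[of _ Bf']) (simp add: Let_def)
  qed
qed

lemma qfinal_norm:
  "qvalid m rs OA \<Longrightarrow> (\<Sum>z\<in>qbasis m. (cmod (qfinal m rs OA \<psi> z))\<^sup>2) = (\<Sum>z\<in>qbasis m. (cmod (\<psi> z))\<^sup>2)"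
proof (induction rs arbitrary: OA \<psi>)
  case Nil
  then show ?case by simp
next
  case (Cons r rs)
  obtain a U q where r: "r = (a, U, q)" by (cases r) auto
  let ?S = "if a then OA else {0..<m} - OA"
  let ?OA = "if a then OA - {q} else insert q OA"
  have v: "local_unitary m ?S U" "qvalid m rs ?OA" using Cons.prems r by (simp_all add: Let_def)
  have "(\<Sum>z\<in>qbasis m. (cmod (qfinal m (r # rs) OA \<psi> z))\<^sup>2) = (\<Sum>z\<in>qbasis m. (cmod (qfinal m rs ?OA (apply_op m ?S U \<psi>) z))\<^sup>2)"
    using r by (simp add: Let_def)
  also have "\<dots> = (\<Sum>z\<in>qbasis m. (cmod (apply_op m ?S U \<psi> z))\<^sup>2)" by (rule Cons.IH[OF v(2)])
  also have "\<dots> = (\<Sum>z\<in>qbasis m. (cmod (\<psi> z))\<^sup>2)" by (rule apply_op_norm[OF v(1)])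
  finally show ?case .
qed


lemma dep_mult: "dep m S g1 \<Longrightarrow> dep m S g2 \<Longrightarrow> dep m S (\<lambda>z. g1 z * g2 z)"
  unfolding dep_def by metis

lemma dep_cnj: "dep m S g \<Longrightarrow> dep m S (\<lambda>z. cnj (g z))"
  unfolding dep_def by metis

lemma dep_bit: fixes F :: "bool \<Rightarrow> 'a" assumes "q < m" "q \<in> S" shows "dep m S (\<lambda>z. F (z!q))"
  unfolding dep_def
proof (intro ballI impI)
  fix z w :: "bool list" assume "\<forall>i<m. i \<in> S \<longrightarrow> z!i = w!i"
  then have "z!q = w!q" using assms by blast
  then show "F (z!q) = F (w!q)" by simp
qed

lemma dep_const: "dep m S (\<lambda>z. c)"
  unfolding dep_def by simp

lemma cmod_sum_le:
  fixes a b s :: "'a \<Rightarrow> complex"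
  assumes "finite R" "\<forall>u. cmod (s u) \<le> 1"
  shows "cmod (\<Sum>u\<in>R. s u * a u * cnj (b u)) \<le> ((\<Sum>u\<in>R. (cmod (a u))\<^sup>2) + (\<Sum>u\<in>R. (cmod (b u))\<^sup>2)) / 2"
proof -
  have "cmod (\<Sum>u\<in>R. s u * a u * cnj (b u)) \<le> (\<Sum>u\<in>R. cmod (s u * a u * cnj (b u)))"
    by (rule norm_sum)
  also have "\<dots> \<le> (\<Sum>u\<in>R. ((cmod (a u))\<^sup>2 + (cmod (b u))\<^sup>2) / 2)"
  proof (rule sum_mono)
    fix u
    have "cmod (s u * a u * cnj (b u)) = cmod (s u) * (cmod (a u) * cmod (b u))" by (simp add: norm_mult)
    also have "\<dots> \<le> 1 * (cmod (a u) * cmod (b u))"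
      using assms(2) by (intro mult_right_mono) auto
    also have "\<dots> \<le> ((cmod (a u))\<^sup>2 + (cmod (b u))\<^sup>2) / 2"
      using sum_squares_ge_zero[of "cmod (a u) - cmod (b u)" 0] by (simp add: power2_eq_square algebra_simps)
    finally show "cmod (s u * a u * cnj (b u)) \<le> ((cmod (a u))\<^sup>2 + (cmod (b u))\<^sup>2) / 2" .
  qed
  also have "\<dots> = ((\<Sum>u\<in>R. (cmod (a u))\<^sup>2) + (\<Sum>u\<in>R. (cmod (b u))\<^sup>2)) / 2"
    by (simp only: sum_divide_distrib[symmetric] sum.distrib)
  finally show ?thesis .
qed

lemma indicator_sum_le:
  assumes "\<And>v. v \<in> R \<Longrightarrow> C v \<Longrightarrow> v = v0" "finite R"
  shows "(\<Sum>v\<in>R. (cmod (if C v then 1 else 0))\<^sup>2) \<le> 1"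
proof -
  have "(\<Sum>v\<in>R. (cmod (if C v then 1 else 0))\<^sup>2) \<le> (\<Sum>v\<in>R. if v = v0 then 1 else 0)"
    using assms(1) by (intro sum_mono) auto
  also have "\<dots> \<le> 1" using assms(2) by (simp add: sum.delta)
  finally show ?thesis .
qed

definition wX :: "nat \<Rightarrow> nat \<Rightarrow> bool list \<Rightarrow> bool list" where
  "wX m n x = x @ replicate (m - n) False"
definition wY :: "nat \<Rightarrow> nat \<Rightarrow> bool list \<Rightarrow> bool list" where
  "wY m n y = replicate n False @ y @ replicate (m - 2*n) False"
definition Ai :: "nat \<Rightarrow> nat \<Rightarrow> nat set \<Rightarrow> bool list \<Rightarrow> bool list \<Rightarrow> qst" where
  "Ai m n OA x = (\<lambda>t z. if \<forall>i<m. i \<in> OA \<longrightarrow> z!i = wX m n x ! i then 1 else 0)"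
definition Bi :: "nat \<Rightarrow> nat \<Rightarrow> nat set \<Rightarrow> bool list \<Rightarrow> bool list \<Rightarrow> qst" where
  "Bi m n OA y = (\<lambda>t z. if \<forall>i<m. i \<notin> OA \<longrightarrow> z!i = wY m n y ! i then 1 else 0)"

lemma init_decomp:
  assumes mn: "2*n \<le> m" and OA: "{0..<n} \<subseteq> OA" "OA \<inter> {n..<2*n} = {}" and xy: "x \<in> inputs n" "y \<in> inputs n"
  shows "decomp m OA 0 (qinit m x y) (Ai m n OA x) (Bi m n OA y)"
proof -
  have lx: "length x = n" and ly: "length y = n" using xy by (auto simp: inputs_def)
  define w where "w = x @ y @ replicate (m - n - n) False"
  have lw: "length w = m" using lx ly mn by (simp add: w_def)
  have wi: "w ! i = (if i < n then x!i else if i < 2*n then y!(i-n) else False)" if "i < m" for i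
    using lx ly that by (auto simp: w_def nth_append)
  have wxi: "wX m n x ! i = (if i < n then x!i else False)" if "i < m" for i
    using lx that by (auto simp: wX_def nth_append)
  have wyi: "wY m n y ! i = (if i < n then False else if i < 2*n then y!(i-n) else False)" if "i < m" for i
    using ly that mn by (auto simp: wY_def nth_append)
  have inA: "i \<in> OA \<Longrightarrow> i < n \<or> 2*n \<le> i" for i using OA(2) by force
  have nA: "i \<notin> OA \<Longrightarrow> n \<le> i" for i using OA(1) by (meson atLeastLessThan_iff le0 not_le subsetD)
  have eq: "qinit m x y z = Ai m n OA x t z * Bi m n OA y t z" if z: "z \<in> qbasis m" for z t
  proof -
    have lz: "length z = m" using z by (simp add: qbasis_def)
    have "(z = w) \<longleftrightarrow> (\<forall>i<m. z!i = w!i)" using lz lw by (simp add: list_eq_iff_nth_eq)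
    also have "\<dots> \<longleftrightarrow> (\<forall>i<m. i \<in> OA \<longrightarrow> z!i = wX m n x ! i) \<and> (\<forall>i<m. i \<notin> OA \<longrightarrow> z!i = wY m n y ! i)"
    proof -
      have "\<forall>i<m. i \<in> OA \<longrightarrow> w!i = wX m n x ! i"
      proof (intro allI impI)
        fix i assume i: "i < m" "i \<in> OA"
        then have "i < n \<or> 2*n \<le> i" using inA by blast
        then show "w!i = wX m n x ! i" using wi[OF i(1)] wxi[OF i(1)] by auto
      qed
      moreover have "\<forall>i<m. i \<notin> OA \<longrightarrow> w!i = wY m n y ! i"
      proof (intro allI impI)
        fix i assume i: "i < m" "i \<notin> OA"
        then have "n \<le> i" using nA by blast
        then show "w!i = wY m n y ! i" using wi[OF i(1)] wyi[OF i(1)] by auto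
      qed
      ultimately show ?thesis by metis
    qed
    finally have key: "(z = w) \<longleftrightarrow> (\<forall>i<m. i \<in> OA \<longrightarrow> z!i = wX m n x ! i) \<and> (\<forall>i<m. i \<notin> OA \<longrightarrow> z!i = wY m n y ! i)" .
    have qi: "qinit m x y z = (if z = w then 1 else 0)" by (simp add: qinit_def w_def lx ly)
    show ?thesis unfolding qi Ai_def Bi_def using key by auto
  qed
  show ?thesis unfolding decomp_def
  proof (intro conjI ballI allI)
    fix z assume "z \<in> qbasis m"
    then show "qinit m x y z = (\<Sum>t\<in>inputs 0. Ai m n OA x t z * Bi m n OA y t z)"
      using eq by (simp add: inputs_def)
  next
    fix t show "dep m OA (Ai m n OA x t)" unfolding dep_def Ai_def by auto
  next
    fix t show "dep m (- OA) (Bi m n OA y t)" unfolding dep_def Bi_def by auto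
  next
    fix t
    show "nrm m OA (Ai m n OA x t) \<le> 1" unfolding nrm_def Ai_def
    proof (rule indicator_sum_le[OF _ RR_fin])
      fix v assume "v \<in> RR m OA" "\<forall>i<m. i \<in> OA \<longrightarrow> v ! i = wX m n x ! i"
      then show "v = restr OA (wX m n x)" using lx mn by (auto simp: RR_char list_eq_iff_nth_eq wX_def)
    qed
  next
    fix t
    show "nrm m (-OA) (Bi m n OA y t) \<le> 1" unfolding nrm_def Bi_def
    proof (rule indicator_sum_le[OF _ RR_fin])
      fix v assume "v \<in> RR m (-OA)" "\<forall>i<m. i \<notin> OA \<longrightarrow> v ! i = wY m n y ! i"
      then show "v = restr (-OA) (wY m n y)" using ly mn by (auto simp: RR_char list_eq_iff_nth_eq wY_def)
    qed
  qed
qed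

lemma qinit_norm:
  assumes "2*n \<le> m" "x \<in> inputs n" "y \<in> inputs n"
  shows "(\<Sum>z\<in>qbasis m. (cmod (qinit m x y z))\<^sup>2) = 1"
proof -
  define w where "w = x @ y @ replicate (m - length x - length y) False"
  have "w \<in> qbasis m" using assms by (auto simp: w_def qbasis_def inputs_def)
  moreover have "(\<Sum>z\<in>qbasis m. (cmod (qinit m x y z))\<^sup>2) = (\<Sum>z\<in>qbasis m. if z = w then 1 else 0)"
    by (intro sum.cong refl) (simp add: qinit_def w_def)
  ultimately show ?thesis by (simp add: sum.delta qbasis_fin)
qed


lemma Q1_proof:
  assumes wue: "q_wue P n f"
  shows "rep n f (2 * length (qrounds P) + 1) (qdelta P n f / 4^(length (qrounds P)))"
proof -
  define m where "m = qnum P"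
  define OA0 where "OA0 = qalice P"
  define rs where "rs = qrounds P"
  define r where "r = length rs"
  define qo where "qo = qout P"
  define \<delta> where "\<delta> = qdelta P n f"
  have wf: "2*n \<le> m" "{0..<n} \<subseteq> OA0" "OA0 \<subseteq> {0..<m}" "OA0 \<inter> {n..<2*n} = {}" "qo < m" "qvalid m rs OA0"
    using wue by (auto simp: q_wue_def qwf_def m_def OA0_def rs_def qo_def)
  have d0: "\<delta> > 0" using wue by (simp add: q_wue_def \<delta>_def)
  define \<Psi> where "\<Psi> x y = qinit m x y" for x y
  have "\<forall>x\<in>inputs n. \<forall>y\<in>inputs n. decomp m OA0 0 (\<Psi> x y) (Ai m n OA0 x) (Bi m n OA0 y)"
    using init_decomp[OF wf(1,2,4)] by (simp add: \<Psi>_def)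
  from decomp_qfinal[OF wf(6) wf(3) this] obtain OA' Af Bf where
    OA': "OA' \<subseteq> {0..<m}" and D: "\<forall>x\<in>inputs n. \<forall>y\<in>inputs n. decomp m OA' r (qfinal m rs OA0 (\<Psi> x y)) (Af x) (Bf y)"
    by (auto simp: r_def)
  define \<psi> where "\<psi> x y = qfinal m rs OA0 (\<Psi> x y)" for x y
  define sA :: "bool list \<Rightarrow> complex" where "sA z = (if qo \<in> OA' then (if z!qo then 1 else -1) else 1)" for z
  define sB :: "bool list \<Rightarrow> complex" where "sB z = (if qo \<in> OA' then 1 else (if z!qo then 1 else -1))" for z
  have dsA: "dep m OA' sA"
  proof (cases "qo \<in> OA'")
    case True
    then show ?thesis unfolding sA_def using dep_bit[OF wf(5) True, of "\<lambda>b. if b then 1 else -1::complex"] by simp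
  next
    case False
    then show ?thesis unfolding sA_def by (simp add: dep_const)
  qed
  have dsB: "dep m (-OA') sB"
  proof (cases "qo \<in> OA'")
    case True
    then show ?thesis unfolding sB_def by (simp add: dep_const)
  next
    case False
    then show ?thesis unfolding sB_def using dep_bit[OF wf(5), of "-OA'" "\<lambda>b. if b then 1 else -1::complex"] False by simp
  qed
  have nsA: "cmod (sA z) \<le> 1" "cmod (sB z) \<le> 1" for z by (auto simp: sA_def sB_def)
  define \<alpha> where "\<alpha> x t t' = (\<Sum>u\<in>RR m OA'. sA u * Af x t u * cnj (Af x t' u))" for x t t'
  define \<beta> where "\<beta> y t t' = (\<Sum>c\<in>RR m (-OA'). sB c * Bf y t c * cnj (Bf y t' c))" for y t t'
  define Dv where "Dv x y = (\<Sum>z\<in>qbasis m. (if z!qo then 1 else -1) * (cmod (\<psi> x y z))\<^sup>2)" for x y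
  have bil: "complex_of_real (Dv x y) = (\<Sum>t\<in>inputs r. \<Sum>t'\<in>inputs r. \<alpha> x t t' * \<beta> y t t')"
    if xy: "x \<in> inputs n" "y \<in> inputs n" for x y
  proof -
    have dec: "decomp m OA' r (\<psi> x y) (Af x) (Bf y)" using D xy by (simp add: \<psi>_def)
    have psi: "\<forall>z\<in>qbasis m. \<psi> x y z = (\<Sum>t\<in>inputs r. Af x t z * Bf y t z)"
      and dA: "\<forall>t. dep m OA' (Af x t)" and dB: "\<forall>t. dep m (-OA') (Bf y t)"
      using dec by (auto simp: decomp_def)
    have "complex_of_real (Dv x y) = (\<Sum>z\<in>qbasis m. sA z * sB z * (\<psi> x y z * cnj (\<psi> x y z)))"
      unfolding Dv_def of_real_sum
    proof (intro sum.cong refl)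
      fix z
      have c: "complex_of_real ((cmod (\<psi> x y z))\<^sup>2) = \<psi> x y z * cnj (\<psi> x y z)" by (rule complex_norm_square)
      show "complex_of_real ((if z!qo then 1 else -1) * (cmod (\<psi> x y z))\<^sup>2) = sA z * sB z * (\<psi> x y z * cnj (\<psi> x y z))"
        unfolding of_real_mult c by (simp add: sA_def sB_def)
    qed
    also have "\<dots> = (\<Sum>z\<in>qbasis m. \<Sum>t\<in>inputs r. \<Sum>t'\<in>inputs r.
        (sA z * Af x t z * cnj (Af x t' z)) * (sB z * Bf y t z * cnj (Bf y t' z)))"
    proof (intro sum.cong refl)
      fix z assume z: "z \<in> qbasis m"
      show "sA z * sB z * (\<psi> x y z * cnj (\<psi> x y z)) = (\<Sum>t\<in>inputs r. \<Sum>t'\<in>inputs r.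
        (sA z * Af x t z * cnj (Af x t' z)) * (sB z * Bf y t z * cnj (Bf y t' z)))"
        unfolding psi[rule_format, OF z] cnj_sum sum_distrib_left sum_distrib_right
        by (subst sum.swap) (simp add: mult_ac)
    qed
    also have "\<dots> = (\<Sum>t\<in>inputs r. \<Sum>t'\<in>inputs r. \<Sum>z\<in>qbasis m.
        (sA z * Af x t z * cnj (Af x t' z)) * (sB z * Bf y t z * cnj (Bf y t' z)))"
    proof -
      have "(\<Sum>z\<in>qbasis m. \<Sum>t\<in>inputs r. \<Sum>t'\<in>inputs r. (sA z * Af x t z * cnj (Af x t' z)) * (sB z * Bf y t z * cnj (Bf y t' z)))
          = (\<Sum>t\<in>inputs r. \<Sum>z\<in>qbasis m. \<Sum>t'\<in>inputs r. (sA z * Af x t z * cnj (Af x t' z)) * (sB z * Bf y t z * cnj (Bf y t' z)))"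
        by (rule sum.swap)
      also have "\<dots> = (\<Sum>t\<in>inputs r. \<Sum>t'\<in>inputs r. \<Sum>z\<in>qbasis m. (sA z * Af x t z * cnj (Af x t' z)) * (sB z * Bf y t z * cnj (Bf y t' z)))"
      proof (rule sum.cong[OF refl])
        fix t show "(\<Sum>z\<in>qbasis m. \<Sum>t'\<in>inputs r. (sA z * Af x t z * cnj (Af x t' z)) * (sB z * Bf y t z * cnj (Bf y t' z)))
           = (\<Sum>t'\<in>inputs r. \<Sum>z\<in>qbasis m. (sA z * Af x t z * cnj (Af x t' z)) * (sB z * Bf y t z * cnj (Bf y t' z)))"
          by (rule sum.swap)
      qed
      finally show ?thesis .
    qed
    also have "\<dots> = (\<Sum>t\<in>inputs r. \<Sum>t'\<in>inputs r. \<alpha> x t t' * \<beta> y t t')"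
    proof (intro sum.cong refl)
      fix t t'
      have g: "dep m OA' (\<lambda>z. sA z * Af x t z * cnj (Af x t' z))"
        using dsA dA by (intro dep_mult dep_cnj) auto
      have h: "dep m (-OA') (\<lambda>z. sB z * Bf y t z * cnj (Bf y t' z))"
        using dsB dB by (intro dep_mult dep_cnj) auto
      show "(\<Sum>z\<in>qbasis m. (sA z * Af x t z * cnj (Af x t' z)) * (sB z * Bf y t z * cnj (Bf y t' z))) = \<alpha> x t t' * \<beta> y t t'"
        unfolding \<alpha>_def \<beta>_def by (rule product_sum[OF g h])
    qed
    finally show ?thesis .
  qed
  have abound: "cmod (\<alpha> x t t') \<le> 1" "cmod (\<beta> y t t') \<le> 1"
    if xy: "x \<in> inputs n" "y \<in> inputs n" and t: "t \<in> inputs r" "t' \<in> inputs r" for x y t t'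
  proof -
    have dec: "decomp m OA' r (\<psi> x y) (Af x) (Bf y)" using D xy by (simp add: \<psi>_def)
    then have nA: "nrm m OA' (Af x t) \<le> 1" "nrm m OA' (Af x t') \<le> 1"
      and nB: "nrm m (-OA') (Bf y t) \<le> 1" "nrm m (-OA') (Bf y t') \<le> 1"
      using t by (auto simp: decomp_def)
    have "cmod (\<alpha> x t t') \<le> (nrm m OA' (Af x t) + nrm m OA' (Af x t')) / 2"
      unfolding \<alpha>_def nrm_def by (rule cmod_sum_le[OF RR_fin]) (use nsA in auto)
    moreover have "(nrm m OA' (Af x t) + nrm m OA' (Af x t')) / 2 \<le> 1" using nA by simp
    ultimately show "cmod (\<alpha> x t t') \<le> 1" by (rule order_trans)
    have "cmod (\<beta> y t t') \<le> (nrm m (-OA') (Bf y t) + nrm m (-OA') (Bf y t')) / 2"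
      unfolding \<beta>_def nrm_def by (rule cmod_sum_le[OF RR_fin]) (use nsA in auto)
    moreover have "(nrm m (-OA') (Bf y t) + nrm m (-OA') (Bf y t')) / 2 \<le> 1" using nB by simp
    ultimately show "cmod (\<beta> y t t') \<le> 1" by (rule order_trans)
  qed
  have errD: "sg (f x y) * Dv x y \<ge> 2 * \<delta>" if xy: "x \<in> inputs n" "y \<in> inputs n" for x y
  proof -
    have norm1: "(\<Sum>z\<in>qbasis m. (cmod (\<psi> x y z))\<^sup>2) = 1"
      unfolding \<psi>_def \<Psi>_def using qfinal_norm[OF wf(6)] qinit_norm[OF wf(1) xy] by simp
    have qe: "qerr P f x y = (\<Sum>z\<in>qbasis m. if z!qo \<noteq> f x y then (cmod (\<psi> x y z))\<^sup>2 else 0)"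
      unfolding qerr_def Let_def \<psi>_def \<Psi>_def m_def[symmetric] rs_def[symmetric] OA0_def[symmetric] qo_def[symmetric]
      by (simp add: sum.inter_filter qbasis_fin)
    have "sg (f x y) * Dv x y = (\<Sum>z\<in>qbasis m. (cmod (\<psi> x y z))\<^sup>2) - 2 * qerr P f x y"
      unfolding qe Dv_def sum_distrib_left sum_subtractf[symmetric]
      by (intro sum.cong refl) (auto simp: sg_def)
    also have "\<dots> = 1 - 2 * qerr P f x y" using norm1 by simp
    finally have e1: "sg (f x y) * Dv x y = 1 - 2 * qerr P f x y" .
    have "qerr P f x y \<le> Max ((\<lambda>(x, y). qerr P f x y) ` (inputs n \<times> inputs n))"
      using xy inputs_fin by (intro Max_ge) auto
    then have "qerr P f x y \<le> 1/2 - \<delta>" by (simp add: \<delta>_def qdelta_def)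
    then show ?thesis using e1 by simp
  qed
  define a where "a s x = (let t = take r (tl s); t' = drop r (tl s) in
      if hd s then Re (\<alpha> x t t') else - Im (\<alpha> x t t'))" for s x
  define b where "b s y = (let t = take r (tl s); t' = drop r (tl s) in
      if hd s then Re (\<beta> y t t') else Im (\<beta> y t t'))" for s y
  have sumab: "(\<Sum>s\<in>inputs (2*r+1). a s x * b s y) = Dv x y" if xy: "x \<in> inputs n" "y \<in> inputs n" for x y
  proof -
    have "(\<Sum>s\<in>inputs (2*r+1). a s x * b s y) = (\<Sum>w\<in>inputs (r+r). a (True#w) x * b (True#w) y + a (False#w) x * b (False#w) y)"
      using sum_inputs_Suc[where d="r+r" and g="\<lambda>s. a s x * b s y"] by (simp add: mult_2)
    also have "\<dots> = (\<Sum>t\<in>inputs r. \<Sum>t'\<in>inputs r. a (True#t@t') x * b (True#t@t') y + a (False#t@t') x * b (False#t@t') y)"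
      by (rule sum_inputs_add)
    also have "\<dots> = (\<Sum>t\<in>inputs r. \<Sum>t'\<in>inputs r. Re (\<alpha> x t t' * \<beta> y t t'))"
      by (intro sum.cong refl) (auto simp: a_def b_def Let_def inputs_def)
    also have "\<dots> = Re (\<Sum>t\<in>inputs r. \<Sum>t'\<in>inputs r. \<alpha> x t t' * \<beta> y t t')"
      by (simp add: Re_sum)
    also have "\<dots> = Dv x y" using bil[OF xy] by (metis Re_complex_of_real)
    finally show ?thesis .
  qed
  have ab1: "\<bar>a s x\<bar> \<le> 1" "\<bar>b s y\<bar> \<le> 1" if s: "s \<in> inputs (2*r+1)" and xy: "x \<in> inputs n" "y \<in> inputs n" for s x y
  proof -
    have "take r (tl s) \<in> inputs r" "drop r (tl s) \<in> inputs r" using s by (auto simp: inputs_def)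
    note bd = abound[OF xy this]
    show "\<bar>a s x\<bar> \<le> 1" unfolding a_def Let_def
      using abs_Re_le_cmod[of "\<alpha> x (take r (tl s)) (drop r (tl s))"] abs_Im_le_cmod[of "\<alpha> x (take r (tl s)) (drop r (tl s))"] bd(1)
      by auto
    show "\<bar>b s y\<bar> \<le> 1" unfolding b_def Let_def
      using abs_Re_le_cmod[of "\<beta> y (take r (tl s)) (drop r (tl s))"] abs_Im_le_cmod[of "\<beta> y (take r (tl s)) (drop r (tl s))"] bd(2)
      by auto
  qed
  have e: "\<delta> / 4^r * 2^(2*r+1) = 2 * \<delta>"
  proof -
    have "(4::real)^r = 2^(2*r)" by (simp add: power_mult)
    then show ?thesis by (simp add: power_add)
  qed
  have inputs_ne': "inputs n \<noteq> {}" by (rule inputs_ne)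
  define a' where "a' s x = (if x \<in> inputs n then a s x else 0)" for s x
  define b' where "b' s y = (if y \<in> inputs n then b s y else 0)" for s y
  have A1: "\<forall>t\<in>inputs (2*r+1). \<forall>x\<in>inputs n. \<bar>a' t x\<bar> \<le> 1"
    using ab1 inputs_ne' by (fastforce simp: a'_def)
  have B1: "\<forall>t\<in>inputs (2*r+1). \<forall>y\<in>inputs n. \<bar>b' t y\<bar> \<le> 1"
    using ab1 inputs_ne' by (fastforce simp: b'_def)
  have S1: "\<forall>x\<in>inputs n. \<forall>y\<in>inputs n. sg (f x y) * (\<Sum>t\<in>inputs (2*r+1). a' t x * b' t y) \<ge> \<delta> / 4^r * 2^(2*r+1)"
    using sumab errD e by (simp add: a'_def b'_def)
  have "rep n f (2*r+1) (\<delta> / 4^r)"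
    unfolding rep_def using A1 B1 S1 d0 by (intro conjI exI[of _ a'] exI[of _ b']) auto
  then show ?thesis by (simp add: r_def rs_def \<delta>_def)
qed


definition gate :: "nat \<Rightarrow> nat \<Rightarrow> (bool list \<Rightarrow> bool \<Rightarrow> bool \<Rightarrow> complex) \<Rightarrow> qop" where
  "gate m p g = (\<lambda>u v. if (\<forall>i<m. i \<noteq> p \<longrightarrow> u!i = v!i) then g (v[p := False]) (u!p) (v!p) else 0)"

lemma sum_RR_upd:
  assumes p: "p \<in> S" "p < m" and v: "v \<in> RR m S"
    and F: "\<forall>u\<in>RR m S. F u \<noteq> 0 \<longrightarrow> (\<forall>i<m. i \<noteq> p \<longrightarrow> u!i = v!i)"
  shows "(\<Sum>u\<in>RR m S. F u) = (\<Sum>b\<in>UNIV. F (v[p := b]))"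
proof -
  let ?V = "(\<lambda>b. v[p := b]) ` UNIV"
  have lv: "length v = m" using v by (simp add: RR_char)
  have sub: "?V \<subseteq> RR m S" using v p by (auto simp: RR_char nth_list_update)
  have "(\<Sum>u\<in>RR m S. F u) = (\<Sum>u\<in>?V. F u)"
  proof (rule sum.mono_neutral_right[OF RR_fin sub], rule ballI, rule ccontr)
    fix u assume u: "u \<in> RR m S - ?V" "F u \<noteq> 0"
    then have agree: "\<forall>i<m. i \<noteq> p \<longrightarrow> u!i = v!i" using F by blast
    have "u = v[p := u!p]" using u(1) agree lv p by (auto simp: RR_char list_eq_iff_nth_eq nth_list_update)
    then show False using u(1) by blast
  qed
  also have "\<dots> = (\<Sum>b\<in>UNIV. F (v[p := b]))"
  proof (rule sum.reindex[unfolded comp_def])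
    show "inj_on (\<lambda>b. v[p := b]) UNIV"
    proof (rule inj_onI)
      fix b b' assume "v[p := b] = v[p := b']"
      then have "v[p := b] ! p = v[p := b'] ! p" by simp
      then show "b = b'" using lv p by simp
    qed
  qed
  finally show ?thesis .
qed

lemma gate_unitary:
  assumes p: "p \<in> S" "p < m"
    and g: "\<And>c b1 b2. (\<Sum>b\<in>UNIV. cnj (g c b b1) * g c b b2) = (if b1 = b2 then 1 else 0)"
  shows "local_unitary m S (gate m p g)"
  unfolding local_unitary_def RR_def[symmetric]
proof (intro ballI)
  fix v v' assume v: "v \<in> RR m S" and v': "v' \<in> RR m S"
  have lv: "length v = m" "length v' = m" using v v' by (auto simp: RR_char)
  show "(\<Sum>u\<in>RR m S. cnj (gate m p g u v) * gate m p g u v') = (if v = v' then 1 else 0)"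
  proof (cases "\<forall>i<m. i \<noteq> p \<longrightarrow> v!i = v'!i")
    case True
    have c: "v'[p := False] = v[p := False]"
    proof (rule nth_equalityI)
      show "length (v'[p := False]) = length (v[p := False])" using lv by simp
    next
      fix i assume "i < length (v'[p := False])"
      then show "v'[p := False] ! i = v[p := False] ! i" using True lv p(2) by (cases "i = p") auto
    qed
    have "(\<Sum>u\<in>RR m S. cnj (gate m p g u v) * gate m p g u v') = (\<Sum>b\<in>UNIV. cnj (gate m p g (v[p := b]) v) * gate m p g (v[p := b]) v')"
      by (rule sum_RR_upd[OF p v]) (auto simp: gate_def)
    also have "\<dots> = (\<Sum>b\<in>UNIV. cnj (g (v[p := False]) b (v!p)) * g (v[p := False]) b (v'!p))"
      using True lv p c by (intro sum.cong refl) (auto simp: gate_def nth_list_update)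
    also have "\<dots> = (if v!p = v'!p then 1 else 0)" by (rule g)
    also have "\<dots> = (if v = v' then 1 else 0)"
    proof -
      have "(v!p = v'!p) = (v = v')"
      proof
        assume "v!p = v'!p"
        show "v = v'"
        proof (rule nth_equalityI)
          show "length v = length v'" using lv by simp
        next
          fix i assume "i < length v"
          then show "v ! i = v' ! i" using True lv \<open>v!p = v'!p\<close> by (cases "i = p") auto
        qed
      qed simp
      then show ?thesis by simp
    qed
    finally show ?thesis .
  next
    case False
    then have "v \<noteq> v'" by auto
    moreover have zero: "cnj (gate m p g u v) * gate m p g u v' = 0" for u
      using False by (auto simp: gate_def)
    have "(\<Sum>u\<in>RR m S. cnj (gate m p g u v) * gate m p g u v') = 0"
      by (rule sum.neutral) (use zero in blast)
    ultimately show ?thesis by simp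
  qed
qed

lemma gate_apply:
  assumes p: "p \<in> S" "p < m" and z: "z \<in> qbasis m"
  shows "apply_op m S (gate m p g) \<psi> z = (\<Sum>b\<in>UNIV. g ((restr S z)[p := False]) (z!p) b * \<psi> (z[p := b]))"
proof -
  let ?v0 = "restr S z"
  have lz: "length z = m" using z by (simp add: qbasis_def)
  have v0: "?v0 \<in> RR m S" by (rule restr_in_RR[OF z])
  have "apply_op m S (gate m p g) \<psi> z = (\<Sum>v\<in>RR m S. gate m p g ?v0 v * \<psi> (mg S z v))"
    by (rule apply_op_eq[OF z])
  also have "\<dots> = (\<Sum>b\<in>UNIV. gate m p g ?v0 (?v0[p := b]) * \<psi> (mg S z (?v0[p := b])))"
    by (rule sum_RR_upd[OF p v0]) (auto simp: gate_def)
  also have "\<dots> = (\<Sum>b\<in>UNIV. g ((restr S z)[p := False]) (z!p) b * \<psi> (z[p := b]))"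
  proof (intro sum.cong refl)
    fix b
    have "mg S z (?v0[p := b]) = z[p := b]" using p lz by (auto simp: list_eq_iff_nth_eq nth_list_update)
    moreover have "gate m p g ?v0 (?v0[p := b]) = g ((restr S z)[p := False]) (z!p) b"
      using p lz by (auto simp: gate_def nth_list_update)
    ultimately show "gate m p g ?v0 (?v0[p := b]) * \<psi> (mg S z (?v0[p := b])) = g ((restr S z)[p := False]) (z!p) b * \<psi> (z[p := b])"
      by simp
  qed
  finally show ?thesis .
qed

fun oaf :: "nat \<Rightarrow> (bool \<times> qop \<times> nat) list \<Rightarrow> nat set \<Rightarrow> nat set" where
  "oaf m [] OA = OA"
| "oaf m ((a, U, q) # rs) OA = oaf m rs (if a then OA - {q} else insert q OA)"

lemma qfinal_append: "qfinal m (rs1 @ rs2) OA \<psi> = qfinal m rs2 (oaf m rs1 OA) (qfinal m rs1 OA \<psi>)"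
  by (induction m rs1 OA \<psi> rule: qfinal.induct) (auto simp: Let_def)

lemma qvalid_append: "qvalid m (rs1 @ rs2) OA \<longleftrightarrow> qvalid m rs1 OA \<and> qvalid m rs2 (oaf m rs1 OA)"
  by (induction m rs1 OA rule: qvalid.induct) (auto simp: Let_def)

lemma apply_op_cong: "(\<forall>w\<in>qbasis m. \<psi> w = \<phi> w) \<Longrightarrow> apply_op m S U \<psi> = apply_op m S U \<phi>"
  unfolding apply_op_def by (intro ext sum.cong refl) auto

lemma qfinal_cong: "(\<forall>w\<in>qbasis m. \<psi> w = \<phi> w) \<Longrightarrow> z \<in> qbasis m \<Longrightarrow> qfinal m rs OA \<psi> z = qfinal m rs OA \<phi> z"
proof (induction m rs OA \<psi> arbitrary: \<phi> rule: qfinal.induct)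
  case (1 m OA \<psi>)
  then show ?case by simp
next
  case (2 m a U q rs OA \<psi>)
  let ?S = "if a then OA else {0..<m} - OA"
  have "apply_op m ?S U \<psi> = apply_op m ?S U \<phi>" by (rule apply_op_cong[OF "2.prems"(1)])
  then show ?case by (simp add: Let_def)
qed

lemma qfinal_single: "qfinal m [(a, U, q)] OA \<psi> = apply_op m (if a then OA else {0..<m} - OA) U \<psi>"
  by (simp add: Let_def)

lemma qvalid_single: "qvalid m [(a, U, q)] OA \<longleftrightarrow> local_unitary m (if a then OA else {0..<m} - OA) U \<and> q \<in> (if a then OA else {0..<m} - OA)"
  by (simp add: Let_def)


definition hmat :: "bool \<Rightarrow> bool \<Rightarrow> complex" where
  "hmat b1 b2 = complex_of_real ((if b1 \<and> b2 then -1 else 1) / sqrt 2)"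

definition idm :: "bool \<Rightarrow> bool \<Rightarrow> complex" where
  "idm b1 b2 = (if b1 = b2 then 1 else 0)"

definition amp :: "real \<Rightarrow> bool \<Rightarrow> real" where
  "amp p b = (if b then sqrt p else sqrt (1 - p))"

definition rot :: "real \<Rightarrow> bool \<Rightarrow> bool \<Rightarrow> complex" where
  "rot p b1 b2 = complex_of_real (if b2 then (if b1 then sqrt (1 - p) else - sqrt p) else amp p b1)"

lemma sum_bool: fixes F :: "bool \<Rightarrow> 'a::comm_monoid_add" shows "(\<Sum>b\<in>(UNIV::bool set). F b) = F True + F False"
  by (simp add: UNIV_bool add.commute)

lemma hmat_unitary: "(\<Sum>b\<in>UNIV. cnj (hmat b b1) * hmat b b2) = (if b1 = b2 then 1 else 0)"
proof -
  have s: "complex_of_real (1 / sqrt 2) * complex_of_real (1 / sqrt 2) = 1/2"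
    by (simp flip: of_real_mult)
  show ?thesis
    by (cases b1; cases b2) (simp_all add: sum_bool hmat_def s flip: of_real_mult)
qed

lemma idm_unitary: "(\<Sum>b\<in>UNIV. cnj (idm b b1) * idm b b2) = (if b1 = b2 then 1 else 0)"
  by (cases b1; cases b2) (simp_all add: sum_bool idm_def)

lemma rot_unitary:
  assumes "0 \<le> p" "p \<le> 1"
  shows "(\<Sum>b\<in>UNIV. cnj (rot p b b1) * rot p b b2) = (if b1 = b2 then 1 else 0)"
proof -
  have a: "sqrt p * sqrt p = p" "sqrt (1-p) * sqrt (1-p) = 1 - p" using assms by simp_all
  show ?thesis
    using assms by (cases b1; cases b2) (simp_all add: sum_bool rot_def amp_def a flip: of_real_mult of_real_add of_real_minus)
qed

lemma rot_flip_unitary: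
  assumes "0 \<le> p" "p \<le> 1"
  shows "(\<Sum>b\<in>UNIV. cnj (rot p (\<not>b) b1) * rot p (\<not>b) b2) = (if b1 = b2 then 1 else 0)"
proof -
  have "(\<Sum>b\<in>UNIV. cnj (rot p (\<not>b) b1) * rot p (\<not>b) b2) = (\<Sum>b\<in>UNIV. cnj (rot p b b1) * rot p b b2)"
    by (simp add: sum_bool add.commute)
  then show ?thesis using rot_unitary[OF assms] by simp
qed

lemma amp_sq: "0 \<le> p \<Longrightarrow> p \<le> 1 \<Longrightarrow> (amp p b)\<^sup>2 = (if b then p else 1 - p)"
  by (simp add: amp_def)

locale qp =
  fixes n k :: nat and pa pb :: "bool list \<Rightarrow> bool list \<Rightarrow> real"
  assumes pa01: "0 \<le> pa t x" "pa t x \<le> 1" and pb01: "0 \<le> pb t y" "pb t y \<le> 1"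
begin

definition mm :: nat where "mm = 2*n + k + 2"
definition tb :: "bool list \<Rightarrow> bool list" where "tb c = map (\<lambda>i. c!(2*n+i)) [0..<k]"
definition xb :: "bool list \<Rightarrow> bool list" where "xb c = take n c"
definition yb :: "bool list \<Rightarrow> bool list" where "yb c = take n (drop n c)"

definition gA :: "bool list \<Rightarrow> bool \<Rightarrow> bool \<Rightarrow> complex" where
  "gA c = rot (pa (tb c) (xb c))"
definition gB :: "bool list \<Rightarrow> bool \<Rightarrow> bool \<Rightarrow> complex" where
  "gB c = (\<lambda>b1 b2. if c!(2*n+k) then rot (pb (tb c) (yb c)) b1 b2 else rot (pb (tb c) (yb c)) (\<not>b1) b2)"

definition r1 :: "nat \<Rightarrow> bool \<times> qop \<times> nat" where "r1 j = (False, gate mm (2*n+j) (\<lambda>c. hmat), 2*n+j)"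
definition r2 :: "bool \<times> qop \<times> nat" where "r2 = (True, gate mm (2*n+k) gA, 2*n+k)"
definition r3 :: "nat \<Rightarrow> bool \<times> qop \<times> nat" where "r3 j = (True, gate mm (2*n+j) (\<lambda>c. idm), 2*n+j)"
definition r4 :: "bool \<times> qop \<times> nat" where "r4 = (False, gate mm (2*n+k+1) gB, 2*n+k+1)"

definition OA0 :: "nat set" where "OA0 = {0..<n} \<union> {2*n+k}"

definition prot :: qprot where
  "prot = \<lparr>qnum = mm, qalice = OA0, qrounds = map r1 [0..<k] @ [r2] @ map r3 [0..<k] @ [r4], qout = 2*n+k+1\<rparr>"

definition B0 :: "bool list \<Rightarrow> bool list \<Rightarrow> bool list \<Rightarrow> bool" where
  "B0 x y z \<longleftrightarrow> xb z = x \<and> yb z = y"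

definition phi1 :: "bool list \<Rightarrow> bool list \<Rightarrow> nat \<Rightarrow> qst" where
  "phi1 x y j z = (if B0 x y z \<and> (\<forall>i. j \<le> i \<and> i < k+2 \<longrightarrow> \<not> z!(2*n+i)) then complex_of_real ((1/sqrt 2)^j) else 0)"

definition phi2 :: "bool list \<Rightarrow> bool list \<Rightarrow> qst" where
  "phi2 x y z = (if B0 x y z \<and> \<not> z!(2*n+k+1) then complex_of_real ((1/sqrt 2)^k * amp (pa (tb z) x) (z!(2*n+k))) else 0)"

definition ampB :: "bool list \<Rightarrow> bool list \<Rightarrow> real" where
  "ampB y z = (if z!(2*n+k) then amp (pb (tb z) y) (z!(2*n+k+1)) else amp (pb (tb z) y) (\<not> z!(2*n+k+1)))"

definition phi4 :: "bool list \<Rightarrow> bool list \<Rightarrow> qst" where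
  "phi4 x y z = (if B0 x y z then complex_of_real ((1/sqrt 2)^k * amp (pa (tb z) x) (z!(2*n+k)) * ampB y z) else 0)"

lemma B0_upd: assumes "2*n \<le> p" shows "B0 x y (z[p := b]) = B0 x y z"
proof -
  have "take n (drop n (z[p := b])) = take n (drop n z)"
    by (rule nth_equalityI) (use assms in \<open>auto simp: nth_list_update\<close>)
  moreover have "take n (z[p := b]) = take n z" using assms by (simp add: take_update_cancel)
  ultimately show ?thesis by (simp add: B0_def xb_def yb_def)
qed

end


lemma oaf_append: "oaf m (rs1 @ rs2) OA = oaf m rs2 (oaf m rs1 OA)"
  by (induction m rs1 OA rule: oaf.induct) auto

lemma oaf_single: "oaf m [(a, U, q)] OA = (if a then OA - {q} else insert q OA)"
  by simp

context qp
begin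

lemma ctrl_nth: "z \<in> qbasis mm \<Longrightarrow> i \<in> S \<Longrightarrow> i \<noteq> p \<Longrightarrow> i < mm \<Longrightarrow> ((restr S z)[p := False]) ! i = z ! i"
  by (simp add: qbasis_def nth_list_update)

lemma tb_ctrl: assumes "z \<in> qbasis mm" "\<And>i. i < k \<Longrightarrow> 2*n+i \<in> S \<and> 2*n+i \<noteq> p"
  shows "tb ((restr S z)[p := False]) = tb z"
  unfolding tb_def
proof (rule map_cong[OF refl])
  fix i assume "i \<in> set [0..<k]"
  then have i: "i < k" by simp
  show "(restr S z)[p := False] ! (2*n+i) = z ! (2*n+i)"
    using assms(2)[OF i] i by (intro ctrl_nth[OF assms(1)]) (auto simp: mm_def)
qed

lemma xb_ctrl: assumes "z \<in> qbasis mm" "\<And>i. i < n \<Longrightarrow> i \<in> S \<and> i \<noteq> p"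
  shows "xb ((restr S z)[p := False]) = xb z"
proof -
  have lz: "length z = mm" using assms(1) by (simp add: qbasis_def)
  show ?thesis unfolding xb_def
  proof (rule nth_equalityI)
    show "length (take n ((restr S z)[p := False])) = length (take n z)" by simp
  next
    fix i assume "i < length (take n ((restr S z)[p := False]))"
    then have i: "i < n" "i < mm" using lz by auto
    have "(restr S z)[p := False] ! i = z ! i"
      using assms(2)[OF i(1)] i by (intro ctrl_nth[OF assms(1)]) auto
    then show "take n ((restr S z)[p := False]) ! i = take n z ! i" using i by simp
  qed
qed

lemma yb_ctrl: assumes "z \<in> qbasis mm" "\<And>i. n \<le> i \<Longrightarrow> i < 2*n \<Longrightarrow> i \<in> S \<and> i \<noteq> p"
  shows "yb ((restr S z)[p := False]) = yb z"
proof -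
  have lz: "length z = mm" using assms(1) by (simp add: qbasis_def)
  show ?thesis unfolding yb_def
  proof (rule nth_equalityI)
    show "length (take n (drop n ((restr S z)[p := False]))) = length (take n (drop n z))" by simp
  next
    fix i assume "i < length (take n (drop n ((restr S z)[p := False])))"
    then have i: "i < n" "n + i < mm" using lz by auto
    have "(restr S z)[p := False] ! (n+i) = z ! (n+i)"
      using assms(2)[of "n+i"] i by (intro ctrl_nth[OF assms(1)]) auto
    then show "take n (drop n ((restr S z)[p := False])) ! i = take n (drop n z) ! i" using i lz by simp
  qed
qed

lemma tb_upd: "2*n+k \<le> p \<Longrightarrow> tb (z[p := b]) = tb z"
  by (auto simp: tb_def nth_list_update)

lemma qinit_phi1:
  assumes xy: "x \<in> inputs n" "y \<in> inputs n" and z: "z \<in> qbasis mm"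
  shows "qinit mm x y z = phi1 x y 0 z"
proof -
  have lx: "length x = n" and ly: "length y = n" using xy by (auto simp: inputs_def)
  have lz: "length z = mm" using z by (simp add: qbasis_def)
  let ?w = "x @ y @ replicate (k+2) False"
  have "z = ?w \<longleftrightarrow> B0 x y z \<and> (\<forall>i. i < k+2 \<longrightarrow> \<not> z!(2*n+i))"
  proof
    assume "z = ?w"
    moreover have "\<forall>i. i < k+2 \<longrightarrow> \<not> ?w!(2*n+i)"
    proof (intro allI impI)
      fix i assume "i < k+2"
      then have "?w!(2*n+i) = replicate (k+2) False ! i" using lx ly by (simp add: nth_append mult_2)
      then show "\<not> ?w!(2*n+i)" using \<open>i < k+2\<close> by (simp del: replicate_Suc)
    qed
    ultimately show "B0 x y z \<and> (\<forall>i. i < k+2 \<longrightarrow> \<not> z!(2*n+i))"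
      using lx ly by (simp add: B0_def xb_def yb_def)
  next
    assume a: "B0 x y z \<and> (\<forall>i. i < k+2 \<longrightarrow> \<not> z!(2*n+i))"
    have d: "drop (2*n) z = replicate (k+2) False"
    proof (rule nth_equalityI)
      show "length (drop (2*n) z) = length (replicate (k+2) False)" using lz by (simp add: mm_def)
    next
      fix i assume "i < length (drop (2*n) z)"
      then have i: "i < k+2" using lz by (simp add: mm_def)
      then have "drop (2*n) z ! i = z!(2*n+i)" using lz by (simp add: mm_def)
      then show "drop (2*n) z ! i = replicate (k+2) False ! i" using a i by (simp del: replicate_Suc)
    qed
    have "z = take n z @ take n (drop n z) @ drop n (drop n z)"
      by (metis append_take_drop_id)
    also have "drop n (drop n z) = drop (2*n) z" by (simp add: mult_2)
    finally show "z = ?w" using a d by (simp add: B0_def xb_def yb_def)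
  qed
  moreover have "mm - length x - length y = k+2" using lx ly by (simp add: mm_def)
  ultimately show ?thesis by (simp add: qinit_def phi1_def)
qed

lemma phase1_step:
  assumes j: "j < k" and z: "z \<in> qbasis mm"
  shows "(\<Sum>b\<in>UNIV. hmat (z!(2*n+j)) b * phi1 x y j (z[2*n+j := b])) = phi1 x y (Suc j) z"
proof -
  let ?p = "2*n+j"
  have lz: "length z = mm" using z by (simp add: qbasis_def)
  have pl: "?p < length z" using lz j by (simp add: mm_def)
  have t: "phi1 x y j (z[?p := True]) = 0"
  proof -
    have "\<not> (\<forall>i. j \<le> i \<and> i < k+2 \<longrightarrow> \<not> z[?p := True]!(2*n+i))"
    proof
      assume A: "\<forall>i. j \<le> i \<and> i < k+2 \<longrightarrow> \<not> z[?p := True]!(2*n+i)"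
      then have "\<not> z[?p := True]!(2*n+j)" using j by auto
      moreover have "z[?p := True]!(2*n+j)" using pl by simp
      ultimately show False by simp
    qed
    then show ?thesis by (simp add: phi1_def)
  qed
  have f: "phi1 x y j (z[?p := False]) = (if B0 x y z \<and> (\<forall>i. Suc j \<le> i \<and> i < k+2 \<longrightarrow> \<not> z!(2*n+i)) then complex_of_real ((1/sqrt 2)^j) else 0)"
  proof -
    have "(\<forall>i. j \<le> i \<and> i < k+2 \<longrightarrow> \<not> z[?p := False]!(2*n+i)) \<longleftrightarrow> (\<forall>i. Suc j \<le> i \<and> i < k+2 \<longrightarrow> \<not> z!(2*n+i))"
    proof
      assume A: "\<forall>i. j \<le> i \<and> i < k+2 \<longrightarrow> \<not> z[?p := False]!(2*n+i)"
      show "\<forall>i. Suc j \<le> i \<and> i < k+2 \<longrightarrow> \<not> z!(2*n+i)"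
      proof (intro allI impI)
        fix i assume i: "Suc j \<le> i \<and> i < k+2"
        then have "j \<le> i" by simp
        then have "\<not> z[?p := False]!(2*n+i)" using A i by blast
        moreover have "z[?p := False]!(2*n+i) = z!(2*n+i)" using i by simp
        ultimately show "\<not> z!(2*n+i)" by simp
      qed
    next
      assume B: "\<forall>i. Suc j \<le> i \<and> i < k+2 \<longrightarrow> \<not> z!(2*n+i)"
      show "\<forall>i. j \<le> i \<and> i < k+2 \<longrightarrow> \<not> z[?p := False]!(2*n+i)"
      proof (intro allI impI)
        fix i assume i: "j \<le> i \<and> i < k+2"
        show "\<not> z[?p := False]!(2*n+i)"
        proof (cases "i = j")
          case True
          then show ?thesis using pl by simp
        next
          case False
          then have "Suc j \<le> i" using i by simp
          then show ?thesis using B i False by simp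
        qed
      qed
    qed
    then show ?thesis by (simp add: phi1_def B0_upd)
  qed
  have h: "hmat (z!?p) False = complex_of_real (1 / sqrt 2)" by (simp add: hmat_def)
  show ?thesis unfolding sum_bool t f h
    by (simp add: phi1_def flip: of_real_mult)
qed

lemma phase1:
  assumes xy: "x \<in> inputs n" "y \<in> inputs n"
  shows "j \<le> k \<Longrightarrow> qvalid mm (map r1 [0..<j]) OA0 \<and> oaf mm (map r1 [0..<j]) OA0 = OA0 \<union> {2*n..<2*n+j} \<and>
     (\<forall>z\<in>qbasis mm. qfinal mm (map r1 [0..<j]) OA0 (qinit mm x y) z = phi1 x y j z)"
proof (induction j)
  case 0
  then show ?case using qinit_phi1[OF xy] by simp
next
  case (Suc j)
  then have j: "j < k" by simp
  note IH = Suc.IH[OF Suc_leD[OF Suc.prems]]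
  let ?OA = "OA0 \<union> {2*n..<2*n+j}"
  let ?S = "{0..<mm} - ?OA"
  let ?p = "2*n+j"
  have p: "?p \<in> ?S" "?p < mm" using j by (auto simp: OA0_def mm_def)
  have split: "map r1 [0..<Suc j] = map r1 [0..<j] @ [r1 j]" by simp
  have v: "qvalid mm [r1 j] ?OA"
    unfolding r1_def qvalid_single using gate_unitary[OF p hmat_unitary] p by simp
  have o: "oaf mm [r1 j] ?OA = OA0 \<union> {2*n..<2*n+Suc j}" by (auto simp: r1_def)
  have s: "qfinal mm (map r1 [0..<Suc j]) OA0 (qinit mm x y) z = phi1 x y (Suc j) z" if z: "z \<in> qbasis mm" for z
  proof -
    have "qfinal mm (map r1 [0..<Suc j]) OA0 (qinit mm x y) z =
        apply_op mm ?S (gate mm ?p (\<lambda>c. hmat)) (qfinal mm (map r1 [0..<j]) OA0 (qinit mm x y)) z"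
    proof -
      have o1: "oaf mm (map r1 [0..<j]) OA0 = ?OA" using IH by blast
      show ?thesis unfolding split qfinal_append o1 by (simp add: r1_def Let_def)
    qed
    also have "\<dots> = (\<Sum>b\<in>UNIV. hmat (z!?p) b * qfinal mm (map r1 [0..<j]) OA0 (qinit mm x y) (z[?p := b]))"
      by (rule gate_apply[OF p z])
    also have "\<dots> = (\<Sum>b\<in>UNIV. hmat (z!?p) b * phi1 x y j (z[?p := b]))"
      using IH z by (intro sum.cong refl) (auto simp: qbasis_def)
    also have "\<dots> = phi1 x y (Suc j) z" by (rule phase1_step[OF j z])
    finally show ?thesis .
  qed
  show ?case using IH v o s unfolding split qvalid_append oaf_append by simp
qed

end


context qp
begin

definition OA1 :: "nat set" where "OA1 = OA0 \<union> {2*n..<2*n+k}"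
definition OA2 :: "nat set" where "OA2 = {0..<n} \<union> {2*n..<2*n+k}"

lemma gA_unitary: "(\<Sum>b\<in>UNIV. cnj (gA c b b1) * gA c b b2) = (if b1 = b2 then 1 else 0)"
  unfolding gA_def by (rule rot_unitary[OF pa01])

lemma gB_unitary: "(\<Sum>b\<in>UNIV. cnj (gB c b b1) * gB c b b2) = (if b1 = b2 then 1 else 0)"
  unfolding gB_def using rot_unitary[OF pb01] rot_flip_unitary[OF pb01] by (cases "c!(2*n+k)") auto

lemma phase2_state:
  assumes z: "z \<in> qbasis mm" and psi: "\<forall>w\<in>qbasis mm. \<psi> w = phi1 x y k w"
  shows "apply_op mm OA1 (gate mm (2*n+k) gA) \<psi> z = phi2 x y z"
proof -
  let ?p = "2*n+k"
  have lz: "length z = mm" using z by (simp add: qbasis_def)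
  have p: "?p \<in> OA1" "?p < mm" by (auto simp: OA1_def OA0_def mm_def)
  have pl: "?p < length z" using lz by (simp add: mm_def)
  let ?c = "(restr OA1 z)[?p := False]"
  have tc: "tb ?c = tb z" by (rule tb_ctrl[OF z]) (auto simp: OA1_def)
  have xc: "xb ?c = xb z" by (rule xb_ctrl[OF z]) (auto simp: OA1_def OA0_def)
  have "apply_op mm OA1 (gate mm ?p gA) \<psi> z = (\<Sum>b\<in>UNIV. gA ?c (z!?p) b * \<psi> (z[?p := b]))"
    by (rule gate_apply[OF p z])
  also have "\<dots> = (\<Sum>b\<in>UNIV. gA ?c (z!?p) b * phi1 x y k (z[?p := b]))"
    using psi z by (intro sum.cong refl) (auto simp: qbasis_def)
  also have "\<dots> = gA ?c (z!?p) False * phi1 x y k (z[?p := False])"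
  proof -
    have "phi1 x y k (z[?p := True]) = 0"
    proof -
      have "\<not> (\<forall>i. k \<le> i \<and> i < k+2 \<longrightarrow> \<not> z[?p := True]!(2*n+i))"
      proof
        assume A: "\<forall>i. k \<le> i \<and> i < k+2 \<longrightarrow> \<not> z[?p := True]!(2*n+i)"
        then have "\<not> z[?p := True]!(2*n+k)" by auto
        moreover have "z[?p := True]!(2*n+k)" using pl by simp
        ultimately show False by simp
      qed
      then show ?thesis by (simp add: phi1_def)
    qed
    then show ?thesis by (simp add: sum_bool)
  qed
  also have "\<dots> = phi2 x y z"
  proof -
    have e: "(\<forall>i. k \<le> i \<and> i < k+2 \<longrightarrow> \<not> z[?p := False]!(2*n+i)) \<longleftrightarrow> \<not> z!(2*n+k+1)"
    proof
      assume A: "\<forall>i. k \<le> i \<and> i < k+2 \<longrightarrow> \<not> z[?p := False]!(2*n+i)"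
      have "k \<le> k+1 \<and> k+1 < k+2" by simp
      then have "\<not> z[?p := False]!(2*n+(k+1))" using A by blast
      moreover have "z[?p := False]!(2*n+(k+1)) = z!(2*n+k+1)" by simp
      ultimately show "\<not> z!(2*n+k+1)" by simp
    next
      assume B: "\<not> z!(2*n+k+1)"
      show "\<forall>i. k \<le> i \<and> i < k+2 \<longrightarrow> \<not> z[?p := False]!(2*n+i)"
      proof (intro allI impI)
        fix i assume i: "k \<le> i \<and> i < k+2"
        then have "i = k \<or> i = k+1" by auto
        then show "\<not> z[?p := False]!(2*n+i)" using B pl by auto
      qed
    qed
    have ph: "phi1 x y k (z[?p := False]) = (if B0 x y z \<and> \<not> z!(2*n+k+1) then complex_of_real ((1/sqrt 2)^k) else 0)"
      unfolding phi1_def e by (simp add: B0_upd)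
    have g: "gA ?c (z!?p) False = complex_of_real (amp (pa (tb z) (xb z)) (z!?p))"
      by (simp add: gA_def rot_def tc xc)
    show ?thesis unfolding ph g phi2_def by (auto simp: B0_def mult.commute)
  qed
  finally show ?thesis .
qed

lemma phase3:
  shows "j \<le> k \<Longrightarrow> qvalid mm (map r3 [0..<j]) OA2 \<and> oaf mm (map r3 [0..<j]) OA2 = {0..<n} \<union> {2*n+j..<2*n+k} \<and>
     (\<forall>z\<in>qbasis mm. qfinal mm (map r3 [0..<j]) OA2 \<psi> z = \<psi> z)"
proof (induction j)
  case 0
  then show ?case by (simp add: OA2_def)
next
  case (Suc j)
  then have j: "j < k" by simp
  note IH = Suc.IH[OF Suc_leD[OF Suc.prems]]
  let ?OA = "{0..<n} \<union> {2*n+j..<2*n+k}"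
  let ?p = "2*n+j"
  have p: "?p \<in> ?OA" "?p < mm" using j by (auto simp: mm_def)
  have split: "map r3 [0..<Suc j] = map r3 [0..<j] @ [r3 j]" by simp
  have v: "qvalid mm [r3 j] ?OA"
    unfolding r3_def qvalid_single using gate_unitary[OF p idm_unitary] p by simp
  have o: "oaf mm [r3 j] ?OA = {0..<n} \<union> {2*n+Suc j..<2*n+k}" by (auto simp: r3_def)
  have s: "qfinal mm (map r3 [0..<Suc j]) OA2 \<psi> z = \<psi> z" if z: "z \<in> qbasis mm" for z
  proof -
    have o1: "oaf mm (map r3 [0..<j]) OA2 = ?OA" using IH by blast
    have "qfinal mm (map r3 [0..<Suc j]) OA2 \<psi> z =
        apply_op mm ?OA (gate mm ?p (\<lambda>c. idm)) (qfinal mm (map r3 [0..<j]) OA2 \<psi>) z"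
      unfolding split qfinal_append o1 by (simp add: r3_def Let_def)
    also have "\<dots> = (\<Sum>b\<in>UNIV. idm (z!?p) b * qfinal mm (map r3 [0..<j]) OA2 \<psi> (z[?p := b]))"
      by (rule gate_apply[OF p z])
    also have "\<dots> = (\<Sum>b\<in>UNIV. idm (z!?p) b * \<psi> (z[?p := b]))"
      using IH z by (intro sum.cong refl) (auto simp: qbasis_def)
    also have "\<dots> = \<psi> z"
    proof (cases "z!?p")
      case True
      then have "z[?p := True] = z" by (metis list_update_id)
      then show ?thesis using True by (simp add: sum_bool idm_def)
    next
      case False
      then have "z[?p := False] = z" by (metis list_update_id)
      then show ?thesis using False by (simp add: sum_bool idm_def)
    qed
    finally show ?thesis .
  qed
  show ?case using IH v o s unfolding split qvalid_append oaf_append by simp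
qed

lemma phase4_state:
  assumes z: "z \<in> qbasis mm" and psi: "\<forall>w\<in>qbasis mm. \<psi> w = phi2 x y w"
  shows "apply_op mm ({0..<mm} - {0..<n}) (gate mm (2*n+k+1) gB) \<psi> z = phi4 x y z"
proof -
  let ?p = "2*n+k+1"
  have Seq: "{0..<mm} - {0..<n} = {n..<mm}" by auto
  let ?S = "{n..<mm}"
  have lz: "length z = mm" using z by (simp add: qbasis_def)
  have p: "?p \<in> ?S" "?p < mm" by (auto simp: mm_def)
  have pl: "?p < length z" using lz by (simp add: mm_def)
  define c where "c = (restr ?S z)[?p := False]"
  have tc: "tb c = tb z" unfolding c_def by (rule tb_ctrl[OF z]) (auto simp: mm_def)
  have yc: "yb c = yb z" unfolding c_def by (rule yb_ctrl[OF z]) (auto simp: mm_def)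
  have ac: "c ! (2*n+k) = z!(2*n+k)" unfolding c_def by (rule ctrl_nth[OF z]) (auto simp: mm_def)
  have "apply_op mm ?S (gate mm ?p gB) \<psi> z = (\<Sum>b\<in>UNIV. gB c (z!?p) b * \<psi> (z[?p := b]))"
    unfolding c_def by (rule gate_apply[OF p z])
  also have "\<dots> = (\<Sum>b\<in>UNIV. gB c (z!?p) b * phi2 x y (z[?p := b]))"
    using psi z by (intro sum.cong refl) (auto simp: qbasis_def)
  also have "\<dots> = gB c (z!?p) False * phi2 x y (z[?p := False])"
  proof -
    have "phi2 x y (z[?p := True]) = 0" using pl by (simp add: phi2_def)
    then show ?thesis by (simp add: sum_bool)
  qed
  also have "\<dots> = phi4 x y z"
  proof -
    have ph: "phi2 x y (z[?p := False]) = (if B0 x y z then complex_of_real ((1/sqrt 2)^k * amp (pa (tb z) x) (z!(2*n+k))) else 0)"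
      using pl by (simp add: phi2_def B0_upd tb_upd)
    have g: "gB c (z!?p) False = complex_of_real (ampB (yb z) z)"
      unfolding gB_def ac tc yc by (simp add: rot_def ampB_def)
    show ?thesis unfolding ph g phi4_def by (auto simp: B0_def mult.commute)
  qed
  finally show ?thesis unfolding Seq .
qed

end


context qp
begin

lemma prot_final:
  assumes xy: "x \<in> inputs n" "y \<in> inputs n"
  shows "qvalid mm (qrounds prot) OA0 \<and> (\<forall>z\<in>qbasis mm. qfinal mm (qrounds prot) OA0 (qinit mm x y) z = phi4 x y z)"
proof -
  let ?R1 = "map r1 [0..<k]" and ?R3 = "map r3 [0..<k]"
  have P1: "qvalid mm ?R1 OA0" "oaf mm ?R1 OA0 = OA1"
    "\<forall>z\<in>qbasis mm. qfinal mm ?R1 OA0 (qinit mm x y) z = phi1 x y k z"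
    using phase1[OF xy, of k] by (auto simp: OA1_def)
  define \<psi>1 where "\<psi>1 = qfinal mm ?R1 OA0 (qinit mm x y)"
  have pA: "2*n+k \<in> OA1" "2*n+k < mm" by (auto simp: OA1_def OA0_def mm_def)
  have v2: "qvalid mm [r2] OA1"
    unfolding r2_def qvalid_single using gate_unitary[OF pA gA_unitary] pA by simp
  have o2: "oaf mm [r2] OA1 = OA2" by (auto simp: r2_def OA1_def OA2_def OA0_def)
  define \<psi>2 where "\<psi>2 = qfinal mm [r2] OA1 \<psi>1"
  have s2: "\<forall>z\<in>qbasis mm. \<psi>2 z = phi2 x y z"
  proof
    fix z assume z: "z \<in> qbasis mm"
    have "\<psi>2 = apply_op mm OA1 (gate mm (2*n+k) gA) \<psi>1" by (simp add: \<psi>2_def r2_def)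
    then show "\<psi>2 z = phi2 x y z" using phase2_state[OF z] P1(3) by (simp add: \<psi>1_def)
  qed
  have P3: "qvalid mm ?R3 OA2" "oaf mm ?R3 OA2 = {0..<n}"
    "\<forall>z\<in>qbasis mm. qfinal mm ?R3 OA2 \<psi>2 z = \<psi>2 z"
    using phase3[of k \<psi>2] by auto
  define \<psi>3 where "\<psi>3 = qfinal mm ?R3 OA2 \<psi>2"
  have s3: "\<forall>z\<in>qbasis mm. \<psi>3 z = phi2 x y z" using P3(3) s2 by (simp add: \<psi>3_def)
  have pB: "2*n+k+1 \<in> {0..<mm} - {0..<n}" "2*n+k+1 < mm" by (auto simp: mm_def)
  have v4: "qvalid mm [r4] {0..<n}"
    unfolding r4_def qvalid_single using gate_unitary[OF pB gB_unitary] pB by simp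
  have s4: "\<forall>z\<in>qbasis mm. qfinal mm [r4] {0..<n} \<psi>3 z = phi4 x y z"
  proof
    fix z assume z: "z \<in> qbasis mm"
    have "qfinal mm [r4] {0..<n} \<psi>3 = apply_op mm ({0..<mm} - {0..<n}) (gate mm (2*n+k+1) gB) \<psi>3"
      by (simp add: r4_def)
    then show "qfinal mm [r4] {0..<n} \<psi>3 z = phi4 x y z" using phase4_state[OF z s3] by simp
  qed
  have R: "qrounds prot = ?R1 @ [r2] @ ?R3 @ [r4]" by (simp add: prot_def)
  have "qvalid mm (qrounds prot) OA0"
    unfolding R qvalid_append using P1 v2 o2 P3 v4 by (simp add: oaf_append)
  moreover have "qfinal mm (qrounds prot) OA0 (qinit mm x y) = qfinal mm [r4] {0..<n} \<psi>3"
    unfolding R qfinal_append using P1(2) o2 P3(2) by (simp add: oaf_append \<psi>1_def \<psi>2_def \<psi>3_def)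
  ultimately show ?thesis using s4 by simp
qed

lemma sum_support:
  assumes xy: "x \<in> inputs n" "y \<in> inputs n" and F: "\<forall>z\<in>qbasis mm. \<not> B0 x y z \<longrightarrow> F z = 0"
  shows "(\<Sum>z\<in>qbasis mm. F z) = (\<Sum>s\<in>inputs (k+2). F (x @ y @ s))"
proof -
  have lx: "length x = n" and ly: "length y = n" using xy by (auto simp: inputs_def)
  let ?g = "\<lambda>s. x @ y @ s"
  have inj: "inj_on ?g (inputs (k+2))" by (auto simp: inj_on_def)
  have img: "?g ` inputs (k+2) = {z \<in> qbasis mm. B0 x y z}"
  proof
    show "?g ` inputs (k+2) \<subseteq> {z \<in> qbasis mm. B0 x y z}"
      using lx ly by (auto simp: inputs_def qbasis_def mm_def B0_def xb_def yb_def)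
  next
    show "{z \<in> qbasis mm. B0 x y z} \<subseteq> ?g ` inputs (k+2)"
    proof
      fix z assume z: "z \<in> {z \<in> qbasis mm. B0 x y z}"
      then have lz: "length z = mm" and b: "take n z = x" "take n (drop n z) = y"
        by (auto simp: qbasis_def B0_def xb_def yb_def)
      have "z = take n z @ take n (drop n z) @ drop n (drop n z)" by (metis append_take_drop_id)
      then have "z = ?g (drop n (drop n z))" using b by simp
      moreover have "drop n (drop n z) \<in> inputs (k+2)" using lz by (simp add: inputs_def mm_def)
      ultimately show "z \<in> ?g ` inputs (k+2)" by blast
    qed
  qed
  have "(\<Sum>z\<in>qbasis mm. F z) = (\<Sum>z\<in>{z \<in> qbasis mm. B0 x y z}. F z)"
    using F by (intro sum.mono_neutral_right[OF qbasis_fin]) auto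
  also have "\<dots> = (\<Sum>s\<in>inputs (k+2). F (x @ y @ s))"
    unfolding img[symmetric] by (subst sum.reindex[OF inj]) simp
  finally show ?thesis .
qed

lemma sum_inputs_2: "(\<Sum>w\<in>inputs 2. G w) = G [True, True] + G [True, False] + G [False, True] + G [False, False]"
proof -
  have "(\<Sum>w\<in>inputs (Suc (Suc 0)). G w) = G [True, True] + G [True, False] + G [False, True] + G [False, False]"
    unfolding sum_inputs_Suc by (simp add: inputs_def algebra_simps)
  then show ?thesis by (simp add: numeral_2_eq_2)
qed

lemma prot_err:
  assumes xy: "x \<in> inputs n" "y \<in> inputs n"
  shows "qerr prot f x y = (\<Sum>t\<in>inputs k. (if f x y then pa t x * (1 - pb t y) + (1 - pa t x) * pb t y
      else pa t x * pb t y + (1 - pa t x) * (1 - pb t y))) / 2^k"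
proof -
  have lx: "length x = n" and ly: "length y = n" using xy by (auto simp: inputs_def)
  have fin: "\<forall>z\<in>qbasis mm. qfinal mm (qrounds prot) OA0 (qinit mm x y) z = phi4 x y z"
    using prot_final[OF xy] by blast
  define F where "F z = (if z!(2*n+k+1) \<noteq> f x y then (cmod (phi4 x y z))\<^sup>2 else 0)" for z
  have "qerr prot f x y = (\<Sum>z\<in>{z \<in> qbasis mm. z!(2*n+k+1) \<noteq> f x y}. (cmod (phi4 x y z))\<^sup>2)"
    unfolding qerr_def Let_def using fin by (simp add: prot_def)
  also have "\<dots> = (\<Sum>z\<in>qbasis mm. F z)"
    unfolding F_def by (simp add: sum.inter_filter qbasis_fin)
  also have "\<dots> = (\<Sum>s\<in>inputs (k+2). F (x @ y @ s))"
    by (rule sum_support[OF xy]) (auto simp: F_def phi4_def)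
  also have "\<dots> = (\<Sum>t\<in>inputs k. \<Sum>w\<in>inputs 2. F (x @ y @ t @ w))"
    by (rule sum_inputs_add)
  also have "\<dots> = (\<Sum>t\<in>inputs k. (if f x y then pa t x * (1 - pb t y) + (1 - pa t x) * pb t y
      else pa t x * pb t y + (1 - pa t x) * (1 - pb t y)) / 2^k)"
  proof (intro sum.cong refl)
    fix t assume t: "t \<in> inputs k"
    have lt: "length t = k" using t by (simp add: inputs_def)
    have zz: "(x @ y @ t @ [a1, b1]) ! (2*n+k) = a1" "(x @ y @ t @ [a1, b1]) ! (2*n+k+1) = b1"
      "B0 x y (x @ y @ t @ [a1, b1])" "tb (x @ y @ t @ [a1, b1]) = t" for a1 b1
      using lx ly lt by (auto simp: nth_append B0_def xb_def yb_def tb_def intro!: nth_equalityI)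
    have sq: "((1 / sqrt 2) ^ k)\<^sup>2 = (1 / 2^k :: real)"
      by (simp add: power_mult_distrib[symmetric] power_divide power2_eq_square flip: power_mult)
    have am: "(amp p b)\<^sup>2 = (if b then p else 1 - p)" if "0 \<le> p" "p \<le> 1" for p b
      using that by (simp add: amp_def)
    have Fv: "F (x @ y @ t @ [a1, b1]) = (if b1 \<noteq> f x y then (if a1 then pa t x else 1 - pa t x) *
         (if a1 then (if b1 then pb t y else 1 - pb t y) else (if b1 then 1 - pb t y else pb t y)) / 2^k else 0)" for a1 b1
    proof -
      have "(cmod (phi4 x y (x @ y @ t @ [a1, b1])))\<^sup>2 = ((1/sqrt 2)^k)\<^sup>2 * (amp (pa t x) a1)\<^sup>2 * (ampB y (x @ y @ t @ [a1, b1]))\<^sup>2"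
        unfolding phi4_def if_P[OF zz(3)] norm_of_real power2_abs by (simp only: power_mult_distrib zz(1) zz(4))
      also have "\<dots> = (if a1 then pa t x else 1 - pa t x) *
         (if a1 then (if b1 then pb t y else 1 - pb t y) else (if b1 then 1 - pb t y else pb t y)) / 2^k"
        unfolding sq ampB_def zz using am[OF pa01] am[OF pb01] by simp
      finally have c: "(cmod (phi4 x y (x @ y @ t @ [a1, b1])))\<^sup>2 = (if a1 then pa t x else 1 - pa t x) *
         (if a1 then (if b1 then pb t y else 1 - pb t y) else (if b1 then 1 - pb t y else pb t y)) / 2^k" .
      show ?thesis by (simp only: F_def zz(2) c)
    qed
    show "(\<Sum>w\<in>inputs 2. F (x @ y @ t @ w)) = (if f x y then pa t x * (1 - pb t y) + (1 - pa t x) * pb t y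
      else pa t x * pb t y + (1 - pa t x) * (1 - pb t y)) / 2^k"
      unfolding sum_inputs_2 Fv by (simp add: field_simps)
  qed
  also have "\<dots> = (\<Sum>t\<in>inputs k. (if f x y then pa t x * (1 - pb t y) + (1 - pa t x) * pb t y
      else pa t x * pb t y + (1 - pa t x) * (1 - pb t y))) / 2^k"
    by (simp add: sum_divide_distrib)
  finally show ?thesis .
qed

end


lemma card_inputs: "card (inputs k) = 2^k"
proof -
  have "inputs k = {xs. set xs \<subseteq> (UNIV::bool set) \<and> length xs = k}" by (auto simp: inputs_def)
  then show ?thesis using card_lists_length_eq[of "UNIV::bool set" k] by (simp add: card_UNIV_bool)
qed

lemma sg_sq: "sg b * sg b = 1" by (simp add: sg_def)

lemma E_proof: "rep n f n (1/2^n)"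
proof -
  define a where "a t x = (if t = x then 1 else 0 :: real)" for t x :: "bool list"
  define b where "b t y = sg (f t y)" for t y
  have s: "(\<Sum>t\<in>inputs n. a t x * b t y) = sg (f x y)" if "x \<in> inputs n" for x y
  proof -
    have "(\<Sum>t\<in>inputs n. a t x * b t y) = (\<Sum>t\<in>inputs n. if t = x then b t y else 0)"
      by (intro sum.cong refl) (simp add: a_def)
    also have "\<dots> = b x y" using that inputs_fin[of n] by (simp add: sum.delta')
    finally show ?thesis by (simp add: b_def)
  qed
  have "\<forall>x\<in>inputs n. \<forall>y\<in>inputs n. sg (f x y) * (\<Sum>t\<in>inputs n. a t x * b t y) \<ge> 1/2^n * 2^n"
    using s sg_sq by simp
  moreover have "\<forall>t\<in>inputs n. \<forall>x\<in>inputs n. \<bar>a t x\<bar> \<le> 1" by (simp add: a_def)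
  moreover have "\<forall>t\<in>inputs n. \<forall>y\<in>inputs n. \<bar>b t y\<bar> \<le> 1" by (simp add: b_def sg_def)
  ultimately show ?thesis unfolding rep_def by (intro conjI exI[of _ a] exI[of _ b]) auto
qed

lemma Q2_proof:
  assumes "rep n f k e"
  shows "\<exists>P. q_wue P n f \<and> length (qrounds P) = 2*k+2 \<and> qdelta P n f \<ge> e/2"
proof -
  obtain a b where e0: "e > 0" and ab: "\<forall>t\<in>inputs k. \<forall>x\<in>inputs n. \<bar>a t x\<bar> \<le> 1"
      "\<forall>t\<in>inputs k. \<forall>y\<in>inputs n. \<bar>b t y\<bar> \<le> 1"
    and sum: "\<forall>x\<in>inputs n. \<forall>y\<in>inputs n. sg (f x y) * (\<Sum>t\<in>inputs k. a t x * b t y) \<ge> e * 2^k"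
    using assms unfolding rep_def by blast
  define cl :: "real \<Rightarrow> real" where "cl r = max (-1) (min 1 r)" for r
  define pa where "pa t x = (1 + cl (a t x)) / 2" for t x
  define pb where "pb t y = (1 + cl (b t y)) / 2" for t y
  interpret qp n k pa pb
    by unfold_locales (auto simp: pa_def pb_def cl_def)
  have clr: "\<bar>r\<bar> \<le> 1 \<Longrightarrow> cl r = r" for r by (auto simp: cl_def)
  have z0: "replicate n False \<in> inputs n" by (simp add: inputs_def)
  have wf: "qwf prot n"
    using prot_final[OF z0 z0] by (auto simp: qwf_def prot_def mm_def OA0_def)
  have err: "qerr prot f x y \<le> 1/2 - e/2" if xy: "x \<in> inputs n" "y \<in> inputs n" for x y
  proof -
    have tm: "(if f x y then pa t x * (1 - pb t y) + (1 - pa t x) * pb t y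
      else pa t x * pb t y + (1 - pa t x) * (1 - pb t y)) = (1 - sg (f x y) * (a t x * b t y)) / 2"
      if t: "t \<in> inputs k" for t
    proof -
      have e1: "pa t x = (1 + a t x)/2" and e2: "pb t y = (1 + b t y)/2"
        using ab t xy clr by (auto simp: pa_def pb_def)
      show ?thesis unfolding e1 e2 by (simp add: sg_def field_simps)
    qed
    have "(\<Sum>t\<in>inputs k. (if f x y then pa t x * (1 - pb t y) + (1 - pa t x) * pb t y
      else pa t x * pb t y + (1 - pa t x) * (1 - pb t y))) = (\<Sum>t\<in>inputs k. (1 - sg (f x y) * (a t x * b t y)) / 2)"
      by (rule sum.cong[OF refl]) (rule tm)
    then have "qerr prot f x y = (\<Sum>t\<in>inputs k. (1 - sg (f x y) * (a t x * b t y)) / 2) / 2^k"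
      unfolding prot_err[OF xy] by simp
    also have "\<dots> = (2^k - sg (f x y) * (\<Sum>t\<in>inputs k. a t x * b t y)) / 2^(k+1)"
      by (simp add: sum_divide_distrib[symmetric] sum_subtractf sum_distrib_left card_inputs)
    also have "\<dots> \<le> 1/2 - e/2"
      using sum xy by (simp add: field_simps)
    finally show ?thesis .
  qed
  have "Max ((\<lambda>(x, y). qerr prot f x y) ` (inputs n \<times> inputs n)) \<le> 1/2 - e/2"
    using err inputs_fin inputs_ne by (intro Max.boundedI) auto
  then have d: "qdelta prot n f \<ge> e/2" by (simp add: qdelta_def)
  have "length (qrounds prot) = 2*k+2" by (simp add: prot_def)
  then show ?thesis using wf d e0 by (intro exI[of _ prot]) (auto simp: q_wue_def)
qed

lemma PC_le_QC: "PC n f \<le> 8 * QC n f"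
proof -
  have ne: "{qcost P n f | P. q_wue P n f} \<noteq> {}"
    using Q2_proof[OF E_proof[of n f]] by auto
  have "PC n f / 8 \<le> QC n f" unfolding QC_def
  proof (rule cInf_greatest[OF ne])
    fix c assume "c \<in> {qcost P n f | P. q_wue P n f}"
    then obtain Q where Q: "q_wue Q n f" "c = qcost Q n f" by auto
    define r where "r = length (qrounds Q)"
    define d where "d = qdelta Q n f"
    have d0: "d > 0" using Q by (simp add: q_wue_def d_def)
    have dl: "\<lfloor>log 2 d\<rfloor> \<le> -1" using floor_log_le[OF d0] qdelta_le[of Q n f] by (simp add: d_def)
    obtain P where P: "c_wue P n f" "cdepth (ctr P) = (2*r+1) + 2" "cdelta P n f \<ge> (d / 4^r)/2"
      using C2_proof[OF Q1_proof[OF Q(1)]] by (auto simp: r_def d_def)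
    have "(4::real)^r = 2^(2*r)" by (simp add: power_mult)
    then have eq: "(d / 4^r)/2 = d / 2^(2*r+1)" by simp
    have le: "d / 2^(2*r+1) \<le> cdelta P n f" using P(3) unfolding eq .
    have "\<lfloor>log 2 (d / 2^(2*r+1))\<rfloor> \<le> \<lfloor>log 2 (cdelta P n f)\<rfloor>"
      using le d0 by (intro floor_log_mono) auto
    then have "\<lfloor>log 2 (cdelta P n f)\<rfloor> \<ge> \<lfloor>log 2 d\<rfloor> - int (2*r+1)"
      using floor_log_div[OF d0, of "2*r+1"] by simp
    then have "ccost P n f \<le> real (2*r+3) - (\<lfloor>log 2 d\<rfloor> - int (2*r+1))"
      unfolding ccost_def P(2) by (simp add: algebra_simps)
    also have "\<dots> \<le> 8 * c" using dl by (simp add: Q(2) qcost_def r_def[symmetric] d_def[symmetric])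
    finally show "PC n f / 8 \<le> c" using PC_le[OF P(1)] by simp
  qed
  then show ?thesis by simp
qed

lemma QC_le_PC: "QC n f \<le> 8 * PC n f"
proof -
  have ne: "{ccost P n f | P. c_wue P n f} \<noteq> {}"
    using C2_proof[OF E_proof[of n f]] by auto
  have "QC n f / 8 \<le> PC n f" unfolding PC_def
  proof (rule cInf_greatest[OF ne])
    fix c assume "c \<in> {ccost P n f | P. c_wue P n f}"
    then obtain Q where Q: "c_wue Q n f" "c = ccost Q n f" by auto
    define r where "r = cdepth (ctr Q)"
    define d where "d = cdelta Q n f"
    have d0: "d > 0" using Q by (simp add: c_wue_def d_def)
    have dl: "\<lfloor>log 2 d\<rfloor> \<le> -1" using floor_log_le[OF d0] cdelta_le[of Q n f] by (simp add: d_def)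
    obtain P where P: "q_wue P n f" "length (qrounds P) = 2*(r+1)+2" "qdelta P n f \<ge> (d / 2^(r+1))/2"
      using Q2_proof[OF C1_proof[OF Q(1)]] by (auto simp: r_def d_def)
    have eq: "(d / 2^(r+1))/2 = d / 2^(r+2)" by (simp add: power_add)
    have "\<lfloor>log 2 (d / 2^(r+2))\<rfloor> \<le> \<lfloor>log 2 (qdelta P n f)\<rfloor>"
      using P(3) d0 by (intro floor_log_mono) (auto simp: eq)
    then have "\<lfloor>log 2 (qdelta P n f)\<rfloor> \<ge> \<lfloor>log 2 d\<rfloor> - int (r+2)"
      using floor_log_div[OF d0, of "r+2"] by simp
    then have "qcost P n f \<le> real (2*(r+1)+2) - (\<lfloor>log 2 d\<rfloor> - int (r+2))"
      unfolding qcost_def P(2) by (simp add: algebra_simps)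
    also have "\<dots> \<le> 8 * c" using dl by (simp add: Q(2) ccost_def r_def[symmetric] d_def[symmetric])
    finally show "QC n f / 8 \<le> c" using QC_le[OF P(1)] by simp
  qed
  then show ?thesis by simp
qed

theorem theorem8p4:
  shows "\<exists>c1 c2 :: real. c1 > 0 \<and> c2 > 0 \<and>
    (\<forall>(n::nat) (f :: bool list \<Rightarrow> bool list \<Rightarrow> bool).
       PC n f \<le> c1 * QC n f \<and> QC n f \<le> c2 * PC n f)"
  using PC_le_QC QC_le_PC by (intro exI[of _ 8] exI[of _ 8]) auto

end
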